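(* Let $E$ be a locally complete complex lcHs, $G\subset E'$ a separating linear subspace, $\nu\colon\mathbb{D}\to(0,\infty)$ continuous, $U_*\subset\mathbb{D}$, and suppose there is $C>0$ with $|f|_\nu\le C\max\bigl(|f(0)|,\sup_{z\in U_*}|f'(z)|\nu(z)\bigr)$ for all $f\in\mathcal{B}\nu(\mathbb{D})$. Let $f\colon\{0\}\cup(\{1\}\times U_* )\to E$ be such that $\sup_{z\in U_*}p_\alpha(f(1,z))\nu(z)<\infty$ for every $\alpha\in\mathfrak{A}$, and such that for each $e'\in G$ there is $f_{e'}\in\mathcal{B}\nu(\mathbb{D})$ with $f_{e'}(0)=e'(f(0))$ and $f_{e'}'(z)=e'(f(1,z))$ for all $z\in U_*$. Then there exists a unique $F\in\mathcal{B}\nu(\mathbb{D},E)$ with $F(0)=f(0)$ and $(\partial^1_{\mathbb{C}})^EF(z)=f(1,z)$ for all $z\in U_*$.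
   Context: $\mathbb{D}$ is the open unit disc in $\mathbb{C}$; "lcHs" means locally convex Hausdorff space over $\mathbb{C}$ with directed fundamental system of seminorms $(p_\alpha)_{\alpha\in\mathfrak{A}}$. $E$ is locally complete if for every closed bounded absolutely convex $D\subset E$ the space $\bigcup_n nD$ normed by the gauge of $D$ is Banach. $G\subset E'$ is separating if $e'(x)=0$ for all $e'\in G$ implies $x=0$. $\mathcal{O}(\mathbb{D},E)$ is the space of holomorphic $E$-valued functions with complex derivative $(\partial^1_{\mathbb{C}})^Ef(z):=\lim_{h\to0,h\in\mathbb{C}\setminus\{0\}}(f(z+h)-f(z))/h$. $\mathcal{B}\nu(\mathbb{D},E):=\{f\in\mathcal{O}(\mathbb{D},E):|f|_{\nu,\alpha}:=\max(p_\alpha(f(0)),\sup_{z\in\mathbb{D}}p_\alpha((\partial^1_{\mathbb{C}})^Ef(z))\nu(z))<\infty\ \forall\alpha\}$; $\mathcal{B}\nu(\mathbb{D}):=\mathcal{B}\nu(\mathbb{D},\mathbb{C})$ with norm $|f|_\nu=\max(|f(0)|,\sup_{z\in\mathbb{D}}|f'(z)|\nu(z))$. *)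

theory Defs
  imports "HOL-Analysis.Analysis"
begin

text \<open>A complex locally convex Hausdorff space is modelled by a type 'e with addition,
  a complex scalar multiplication sc, and a directed fundamental system of seminorms
  p indexed by the type 'i.\<close>

definition lcHs :: "(complex \<Rightarrow> 'e::ab_group_add \<Rightarrow> 'e) \<Rightarrow> ('i \<Rightarrow> 'e \<Rightarrow> real) \<Rightarrow> bool" where
  "lcHs sc p \<longleftrightarrow>
     (\<forall>a x y. sc a (x + y) = sc a x + sc a y) \<and>
     (\<forall>a b x. sc (a + b) x = sc a x + sc b x) \<and>
     (\<forall>a b x. sc a (sc b x) = sc (a * b) x) \<and>
     (\<forall>x. sc 1 x = x) \<and>
     (\<forall>i x y. p i (x + y) \<le> p i x + p i y) \<and>
     (\<forall>i a x. p i (sc a x) = cmod a * p i x) \<and>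
     (\<forall>i j. \<exists>k. \<forall>x. max (p i x) (p j x) \<le> p k x) \<and>
     (\<forall>x. (\<forall>i. p i x = 0) \<longrightarrow> x = 0)"

definition dual_lc :: "(complex \<Rightarrow> 'e::ab_group_add \<Rightarrow> 'e) \<Rightarrow> ('i \<Rightarrow> 'e \<Rightarrow> real) \<Rightarrow> ('e \<Rightarrow> complex) set" where
  "dual_lc sc p = {e. (\<forall>x y. e (x + y) = e x + e y) \<and> (\<forall>a x. e (sc a x) = a * e x) \<and>
      (\<forall>x. \<forall>\<epsilon>>0. \<exists>i. \<exists>\<delta>>0. \<forall>y. p i (y - x) < \<delta> \<longrightarrow> cmod (e y - e x) < \<epsilon>)}"

definition abs_convex_lc :: "(complex \<Rightarrow> 'e::ab_group_add \<Rightarrow> 'e) \<Rightarrow> 'e set \<Rightarrow> bool" where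
  "abs_convex_lc sc D \<longleftrightarrow>
     (\<forall>x\<in>D. \<forall>y\<in>D. \<forall>a b. cmod a + cmod b \<le> 1 \<longrightarrow> sc a x + sc b y \<in> D)"

definition bounded_lc :: "('i \<Rightarrow> 'e \<Rightarrow> real) \<Rightarrow> 'e set \<Rightarrow> bool" where
  "bounded_lc p D \<longleftrightarrow> (\<forall>i. \<exists>M. \<forall>x\<in>D. p i x \<le> M)"

definition closed_lc :: "('i \<Rightarrow> 'e::ab_group_add \<Rightarrow> real) \<Rightarrow> 'e set \<Rightarrow> bool" where
  "closed_lc p D \<longleftrightarrow> (\<forall>x. (\<forall>i. \<forall>\<epsilon>>0. \<exists>y\<in>D. p i (x - y) < \<epsilon>) \<longrightarrow> x \<in> D)"

definition span_lc :: "(complex \<Rightarrow> 'e \<Rightarrow> 'e) \<Rightarrow> 'e set \<Rightarrow> 'e set" where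
  "span_lc sc D = (\<Union>n::nat. sc (of_nat n) ` D)"

definition gauge_lc :: "(complex \<Rightarrow> 'e \<Rightarrow> 'e) \<Rightarrow> 'e set \<Rightarrow> 'e \<Rightarrow> real" where
  "gauge_lc sc D x = Inf {t::real. t > 0 \<and> x \<in> sc (complex_of_real t) ` D}"

definition locally_complete :: "(complex \<Rightarrow> 'e::ab_group_add \<Rightarrow> 'e) \<Rightarrow> ('i \<Rightarrow> 'e \<Rightarrow> real) \<Rightarrow> bool" where
  "locally_complete sc p \<longleftrightarrow>
     (\<forall>D. closed_lc p D \<and> bounded_lc p D \<and> abs_convex_lc sc D \<longrightarrow>
        (\<forall>X. (\<forall>n. X n \<in> span_lc sc D) \<and>
             (\<forall>\<epsilon>>0. \<exists>N. \<forall>m\<ge>N. \<forall>n\<ge>N. gauge_lc sc D (X m - X n) < \<epsilon>) \<longrightarrow>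
             (\<exists>x\<in>span_lc sc D. (\<lambda>n. gauge_lc sc D (X n - x)) \<longlonglongrightarrow> 0)))"

definition has_derivE :: "(complex \<Rightarrow> 'e \<Rightarrow> 'e::ab_group_add) \<Rightarrow> ('i \<Rightarrow> 'e \<Rightarrow> real) \<Rightarrow>
    (complex \<Rightarrow> 'e) \<Rightarrow> 'e \<Rightarrow> complex \<Rightarrow> bool" where
  "has_derivE sc p F d z \<longleftrightarrow>
     (\<forall>i. ((\<lambda>h. p i (sc (1 / h) (F (z + h) - F z) - d)) \<longlongrightarrow> 0) (at 0))"

definition derivE :: "(complex \<Rightarrow> 'e \<Rightarrow> 'e::ab_group_add) \<Rightarrow> ('i \<Rightarrow> 'e \<Rightarrow> real) \<Rightarrow>
    (complex \<Rightarrow> 'e) \<Rightarrow> complex \<Rightarrow> 'e" where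
  "derivE sc p F z = (SOME d. has_derivE sc p F d z)"

definition Bnu_E :: "(complex \<Rightarrow> 'e \<Rightarrow> 'e::ab_group_add) \<Rightarrow> ('i \<Rightarrow> 'e \<Rightarrow> real) \<Rightarrow>
    (complex \<Rightarrow> real) \<Rightarrow> (complex \<Rightarrow> 'e) set" where
  "Bnu_E sc p \<nu> = {F. (\<forall>z\<in>ball 0 1. \<exists>d. has_derivE sc p F d z) \<and>
      (\<forall>i. bdd_above ((\<lambda>z. p i (derivE sc p F z) * \<nu> z) ` ball 0 1))}"

definition Bnu :: "(complex \<Rightarrow> real) \<Rightarrow> (complex \<Rightarrow> complex) set" where
  "Bnu \<nu> = {f. f holomorphic_on ball 0 1 \<and>
      bdd_above ((\<lambda>z. cmod (deriv f z) * \<nu> z) ` ball 0 1)}"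

text \<open>Supremum of a family of nonnegative reals; the empty supremum is read as 0.\<close>
definition sup0 :: "('a \<Rightarrow> real) \<Rightarrow> 'a set \<Rightarrow> real" where
  "sup0 g A = Sup (insert 0 (g ` A))"

definition norm_nu :: "(complex \<Rightarrow> real) \<Rightarrow> (complex \<Rightarrow> complex) \<Rightarrow> real" where
  "norm_nu \<nu> f = max (cmod (f 0)) (sup0 (\<lambda>z. cmod (deriv f z) * \<nu> z) (ball 0 1))"

end

theory Submission
  imports Defs "HOL-Complex_Analysis.Complex_Analysis"
begin


locale lcs =
  fixes sc :: "complex \<Rightarrow> 'e::ab_group_add \<Rightarrow> 'e" and p :: "'i \<Rightarrow> 'e \<Rightarrow> real"
  assumes E: "lcHs sc p"
begin

lemma sc_add: "sc a (x + y) = sc a x + sc a y" using E unfolding lcHs_def by auto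
lemma sc_add2: "sc (a + b) x = sc a x + sc b x" using E unfolding lcHs_def by auto
lemma sc_mult: "sc a (sc b x) = sc (a * b) x" using E unfolding lcHs_def by auto
lemma sc_one[simp]: "sc 1 x = x" using E unfolding lcHs_def by auto
lemma p_tri: "p i (x + y) \<le> p i x + p i y" using E unfolding lcHs_def by auto
lemma p_sc: "p i (sc a x) = cmod a * p i x" using E unfolding lcHs_def by auto
lemma p_dir: "\<exists>k. \<forall>x. max (p i x) (p j x) \<le> p k x" using E unfolding lcHs_def by auto
lemma p_haus: "(\<And>i. p i x = 0) \<Longrightarrow> x = 0" using E unfolding lcHs_def by auto

lemma sc_zero[simp]: "sc 0 x = 0"
  using sc_add2[of 0 0 x] by simp
lemma sc_0[simp]: "sc a 0 = 0"
  using sc_add[of a 0 0] by simp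
lemma sc_minus1: "sc (-1) x = - x"
proof -
  have "sc (-1) x + x = 0" using sc_add2[of "-1" 1 x] by simp
  then show ?thesis by (simp add: eq_neg_iff_add_eq_0)
qed
lemma sc_neg: "sc a (- x) = - sc a x"
  by (metis sc_minus1 sc_mult mult.commute)
lemma sc_diff: "sc a (x - y) = sc a x - sc a y"
  unfolding diff_conv_add_uminus by (simp only: sc_add sc_neg)
lemma sc_negc: "sc (- a) x = - sc a x"
  by (metis sc_minus1 sc_mult mult_minus1)
lemma sc_diff2: "sc (a - b) x = sc a x - sc b x"
  unfolding diff_conv_add_uminus by (simp only: sc_add2 sc_negc)
lemma p_0[simp]: "p i 0 = 0"
  using p_sc[of i 0 0] by simp
lemma p_neg: "p i (- x) = p i x"
  using p_sc[of i "-1" x] by (simp add: sc_minus1)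
lemma p_nonneg: "p i x \<ge> 0"
  using p_tri[of i x "-x"] p_neg[of i x] by simp
lemma p_commute: "p i (x - y) = p i (y - x)"
  by (metis minus_diff_eq p_neg)
lemma p_tri_diff: "p i (x - z) \<le> p i (x - y) + p i (y - z)"
  using p_tri[of i "x - y" "y - z"] by simp
lemma p_diff_le: "p i (x - y) \<le> p i x + p i y"
  using p_tri[of i x "-y"] p_neg[of i y] by simp

lemma p_sum_list: "p i (sum_list xs) \<le> sum_list (map (p i) xs)"
  by (induction xs) (auto intro: order_trans[OF p_tri])

lemma p_sum: "p i (\<Sum>k\<in>A. f k) \<le> (\<Sum>k\<in>A. p i (f k))"
  by (induction A rule: infinite_finite_induct) (auto intro: order_trans[OF p_tri])

lemma sc_sum: "sc a (\<Sum>k\<in>A. f k) = (\<Sum>k\<in>A. sc a (f k))"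
  by (induction A rule: infinite_finite_induct) (auto simp: sc_add)

lemma sc_sum_list: "sc a (sum_list xs) = sum_list (map (sc a) xs)"
  by (induction xs) (auto simp: sc_add)

lemma dual_add: "e \<in> dual_lc sc p \<Longrightarrow> e (x + y) = e x + e y"
  unfolding dual_lc_def by auto
lemma dual_sc: "e \<in> dual_lc sc p \<Longrightarrow> e (sc a x) = a * e x"
  unfolding dual_lc_def by auto
lemma dual_0: "e \<in> dual_lc sc p \<Longrightarrow> e 0 = 0"
  using dual_sc[of e 0 0] by simp
lemma dual_neg: "e \<in> dual_lc sc p \<Longrightarrow> e (- x) = - e x"
  using dual_sc[of e "-1" x] by (simp add: sc_minus1)
lemma dual_diff: "e \<in> dual_lc sc p \<Longrightarrow> e (x - y) = e x - e y"
  unfolding diff_conv_add_uminus by (simp only: dual_add dual_neg)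
lemma dual_sum: "e \<in> dual_lc sc p \<Longrightarrow> e (\<Sum>k\<in>A. f k) = (\<Sum>k\<in>A. e (f k))"
  by (induction A rule: infinite_finite_induct) (auto simp: dual_add dual_0)
lemma dual_sum_list: "e \<in> dual_lc sc p \<Longrightarrow> e (sum_list xs) = sum_list (map e xs)"
  by (induction xs) (auto simp: dual_add dual_0)

lemma dual_bound:
  assumes "e \<in> dual_lc sc p"
  obtains i K where "K \<ge> 0" "\<And>y. cmod (e y) \<le> K * p i y"
proof -
  obtain i \<delta> where d: "\<delta> > 0" "\<And>y. p i (y - 0) < \<delta> \<Longrightarrow> cmod (e y - e 0) < 1"
  proof -
    have "\<forall>x. \<forall>\<epsilon>>0. \<exists>i. \<exists>\<delta>>0. \<forall>y. p i (y - x) < \<delta> \<longrightarrow> cmod (e y - e x) < \<epsilon>"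
      using assms unfolding dual_lc_def by auto
    then have "\<exists>i. \<exists>\<delta>>0. \<forall>y. p i (y - 0) < \<delta> \<longrightarrow> cmod (e y - e 0) < 1"
      by (metis zero_less_one)
    then show ?thesis using that by blast
  qed
  have d': "\<And>y. p i y < \<delta> \<Longrightarrow> cmod (e y) < 1" using d assms by (simp add: dual_0)
  have "cmod (e y) \<le> (2/\<delta>) * p i y" for y
  proof (cases "p i y = 0")
    case True
    have "cmod (e y) < 1 / t" if "t > 0" for t :: real
    proof -
      have "p i (sc (of_real t) y) < \<delta>" using True d by (simp add: p_sc)
      then have "cmod (e (sc (of_real t) y)) < 1" by (rule d')
      then have "t * cmod (e y) < 1" using assms that by (simp add: dual_sc norm_mult)
      then show ?thesis using that by (simp add: field_simps)
    qed
    then have "cmod (e y) \<le> 0"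
    proof -
      { assume "cmod (e y) > 0"
        then have "cmod (e y) < 1 / (1 / cmod (e y))" using \<open>\<And>t. t>0 \<Longrightarrow> _\<close>[of "1/cmod (e y)"] by simp
        then have False by simp }
      then show ?thesis by force
    qed
    then show ?thesis using True by simp
  next
    case False
    then have pos: "p i y > 0" using p_nonneg[of i y] by simp
    define t where "t = \<delta> / (2 * p i y)"
    have tpos: "t > 0" using pos d by (simp add: t_def)
    have "p i (sc (of_real t) y) = t * p i y" using tpos by (simp add: p_sc)
    also have "\<dots> = \<delta>/2" using pos by (simp add: t_def)
    finally have "p i (sc (of_real t) y) = \<delta>/2" .
    then have "p i (sc (of_real t) y) < \<delta>" using d by simp
    then have "cmod (e (sc (of_real t) y)) < 1" by (rule d')
    then have "t * cmod (e y) < 1" using assms tpos by (simp add: dual_sc norm_mult)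
    then have "cmod (e y) < 1 / t" using tpos by (simp add: field_simps)
    then show ?thesis using pos d by (simp add: t_def field_simps)
  qed
  then show ?thesis using that[of "2/\<delta>" i] d by simp
qed

end



lemma sup0_upper: "bdd_above (f ` A) \<Longrightarrow> x \<in> A \<Longrightarrow> f x \<le> sup0 f A"
  unfolding sup0_def by (rule cSup_upper) auto
lemma sup0_nonneg: "bdd_above (f ` A) \<Longrightarrow> 0 \<le> sup0 f A"
  unfolding sup0_def by (rule cSup_upper) auto
lemma sup0_least: "B \<ge> 0 \<Longrightarrow> (\<And>x. x \<in> A \<Longrightarrow> f x \<le> B) \<Longrightarrow> sup0 f A \<le> B"
  unfolding sup0_def by (rule cSup_least) auto

lemma deriv_lin:
  assumes "g holomorphic_on ball 0 1" "h holomorphic_on ball 0 1" "z \<in> ball 0 1"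
  shows "deriv (\<lambda>w. a * g w + b * h w) z = a * deriv g z + b * deriv h z"
proof -
  have "g field_differentiable at z" "h field_differentiable at z"
    using assms holomorphic_on_imp_differentiable_at by auto
  then show ?thesis
    by (subst deriv_add) (auto intro!: derivative_intros simp: deriv_cmult)
qed

lemma compact_in_ball:
  fixes K :: "complex set"
  assumes "compact K" "K \<subseteq> ball 0 1"
  obtains \<rho> where "0 \<le> \<rho>" "\<rho> < 1" "K \<subseteq> cball 0 \<rho>"
proof (cases "K = {}")
  case True then show ?thesis using that[of 0] by auto
next
  case False
  obtain x where x: "x \<in> K" "\<And>y. y \<in> K \<Longrightarrow> norm y \<le> norm x"
  proof -
    have "compact (norm ` K)" using assms(1) by (intro compact_continuous_image continuous_intros)
    then obtain s where "s \<in> norm ` K" "\<forall>t\<in>norm ` K. t \<le> s"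
      using compact_attains_sup[of "norm ` K"] False by blast
    then show ?thesis using that by auto
  qed
  show ?thesis using that[of "norm x"] x assms by (auto simp: subset_iff)
qed

lemma holo_diff_bound:
  assumes hol: "g holomorphic_on ball 0 1" and "0 \<le> \<rho>" "\<rho> < 1"
    and bd: "\<And>z. z \<in> cball 0 \<rho> \<Longrightarrow> cmod (deriv g z) \<le> B"
    and z: "z \<in> cball 0 \<rho>" and w: "w \<in> cball 0 \<rho>"
  shows "cmod (g z - g w) \<le> B * cmod (z - w)"
proof (rule field_differentiable_bound[OF convex_cball _ bd z w])
  fix x assume x: "x \<in> cball (0::complex) \<rho>"
  then have "x \<in> ball 0 1" using \<open>\<rho> < 1\<close> by auto
  then have "g field_differentiable at x"
    using hol holomorphic_on_imp_differentiable_at by auto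
  then show "(g has_field_derivative deriv g x) (at x within cball 0 \<rho>)"
    using DERIV_deriv_iff_field_differentiable has_field_derivative_at_within by blast
qed

locale scal =
  fixes \<nu> :: "complex \<Rightarrow> real" and U :: "complex set" and C :: real
  assumes nu_cont: "continuous_on (ball 0 1) \<nu>"
    and nu_pos: "\<forall>z\<in>ball 0 1. \<nu> z > 0"
    and U_sub: "U \<subseteq> ball 0 1"
    and C_pos: "C > 0"
    and samp: "\<forall>g\<in>Bnu \<nu>. norm_nu \<nu> g \<le> C * max (cmod (g 0)) (sup0 (\<lambda>z. cmod (deriv g z) * \<nu> z) U)"
begin

definition Bl where
  "Bl = {g. g holomorphic_on ball 0 1 \<and> cmod (g 0) \<le> 1 \<and> (\<forall>z\<in>ball 0 1. cmod (deriv g z) * \<nu> z \<le> 1)}"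

definition conv :: "(nat \<Rightarrow> complex \<Rightarrow> complex) \<Rightarrow> (complex \<Rightarrow> complex) \<Rightarrow> bool" where
  "conv gs g \<longleftrightarrow> (\<forall>z\<in>ball 0 1. (\<lambda>n. gs n z) \<longlonglongrightarrow> g z) \<and> (\<forall>z\<in>ball 0 1. (\<lambda>n. deriv (gs n) z) \<longlonglongrightarrow> deriv g z)"

lemma nu_min:
  assumes "compact K" "K \<subseteq> ball 0 1"
  obtains m where "m > 0" "\<And>z. z \<in> K \<Longrightarrow> m \<le> \<nu> z"
proof (cases "K = {}")
  case True then show ?thesis using that[of 1] by auto
next
  case False
  obtain x where x: "x \<in> K" "\<And>y. y \<in> K \<Longrightarrow> \<nu> x \<le> \<nu> y"
    using continuous_attains_inf[OF assms(1) False continuous_on_subset[OF nu_cont assms(2)]] by blast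
  show ?thesis using that[of "\<nu> x"] x assms nu_pos by auto
qed

lemma nu_nonneg: "z \<in> ball 0 1 \<Longrightarrow> 0 \<le> \<nu> z"
  using nu_pos less_imp_le by blast

lemma Bnu_D: "g \<in> Bnu \<nu> \<Longrightarrow> g holomorphic_on ball 0 1"
  "g \<in> Bnu \<nu> \<Longrightarrow> bdd_above ((\<lambda>z. cmod (deriv g z) * \<nu> z) ` ball 0 1)"
  unfolding Bnu_def by auto

lemma norm_nu_ge0: "g \<in> Bnu \<nu> \<Longrightarrow> cmod (g 0) \<le> norm_nu \<nu> g"
  unfolding norm_nu_def by simp
lemma norm_nu_ge1: "g \<in> Bnu \<nu> \<Longrightarrow> z \<in> ball 0 1 \<Longrightarrow> cmod (deriv g z) * \<nu> z \<le> norm_nu \<nu> g"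
  unfolding norm_nu_def using sup0_upper[OF Bnu_D(2)] by (meson max.cobounded2 order_trans)
lemma norm_nu_nonneg: "g \<in> Bnu \<nu> \<Longrightarrow> 0 \<le> norm_nu \<nu> g"
  using norm_nu_ge0[of g] by (meson norm_ge_zero order_trans)
lemma norm_nu_le:
  assumes "B \<ge> 0" "cmod (g 0) \<le> B" "\<And>z. z \<in> ball 0 1 \<Longrightarrow> cmod (deriv g z) * \<nu> z \<le> B"
  shows "norm_nu \<nu> g \<le> B"
  unfolding norm_nu_def using assms by (auto intro!: sup0_least)

lemma deriv_bound_nu:
  assumes "z \<in> ball 0 1" "cmod (deriv g z) * \<nu> z \<le> B" "\<nu> z \<ge> m" "m > 0" "B \<ge> 0"
  shows "cmod (deriv g z) \<le> B / m"
proof -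
  have "cmod (deriv g z) * m \<le> cmod (deriv g z) * \<nu> z" using assms by (simp add: mult_left_mono)
  then show ?thesis using assms by (simp add: field_simps)
qed

lemma Bl_Bnu: "g \<in> Bl \<Longrightarrow> g \<in> Bnu \<nu>"
  unfolding Bl_def Bnu_def bdd_above_def by auto
lemma Bl_norm: "g \<in> Bl \<Longrightarrow> norm_nu \<nu> g \<le> 1"
  unfolding Bl_def by (auto intro!: norm_nu_le)

lemma Bnu_lin:
  assumes "g \<in> Bnu \<nu>" "h \<in> Bnu \<nu>"
  shows "(\<lambda>w. a * g w + b * h w) \<in> Bnu \<nu>"
proof -
  have hg: "g holomorphic_on ball 0 1" "h holomorphic_on ball 0 1" using assms Bnu_D by auto
  obtain Bg where Bg: "\<forall>z\<in>ball 0 1. cmod (deriv g z) * \<nu> z \<le> Bg"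
    using Bnu_D(2)[OF assms(1)] by (auto simp: bdd_above_def)
  obtain Bh where Bh: "\<forall>z\<in>ball 0 1. cmod (deriv h z) * \<nu> z \<le> Bh"
    using Bnu_D(2)[OF assms(2)] by (auto simp: bdd_above_def)
  have "cmod (deriv (\<lambda>w. a * g w + b * h w) z) * \<nu> z \<le> cmod a * Bg + cmod b * Bh" if z: "z \<in> ball 0 1" for z
  proof -
    have "cmod (deriv (\<lambda>w. a * g w + b * h w) z) * \<nu> z = cmod (a * deriv g z + b * deriv h z) * \<nu> z"
      using deriv_lin[OF hg z] by simp
    also have "\<dots> \<le> (cmod a * cmod (deriv g z) + cmod b * cmod (deriv h z)) * \<nu> z"
      using nu_nonneg[OF z] by (intro mult_right_mono) (auto intro: order_trans[OF norm_triangle_ineq] simp: norm_mult)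
    also have "\<dots> = cmod a * (cmod (deriv g z) * \<nu> z) + cmod b * (cmod (deriv h z) * \<nu> z)"
      by (simp add: algebra_simps)
    also have "\<dots> \<le> cmod a * Bg + cmod b * Bh"
      using Bg z Bh by (intro add_mono mult_left_mono) auto
    finally show ?thesis .
  qed
  then have "bdd_above ((\<lambda>z. cmod (deriv (\<lambda>w. a * g w + b * h w) z) * \<nu> z) ` ball 0 1)"
    by (intro bdd_aboveI2) auto
  then show ?thesis using hg unfolding Bnu_def
    by (auto intro!: holomorphic_intros)
qed

lemma Bl_convex:
  assumes "g \<in> Bl" "h \<in> Bl" "0 \<le> t" "t \<le> 1"
  shows "(\<lambda>w. of_real (1 - t) * g w + of_real t * h w) \<in> Bl"
proof -
  have hg: "g holomorphic_on ball 0 1" "h holomorphic_on ball 0 1" using assms unfolding Bl_def by auto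
  have nm: "cmod (of_real (1 - t) * x) = (1 - t) * cmod x" "cmod (of_real t * x) = t * cmod x" for x
    by (simp only: norm_mult norm_of_real; use assms in simp)+
  have "cmod (of_real (1 - t) * g 0 + of_real t * h 0) \<le> (1 - t) * cmod (g 0) + t * cmod (h 0)"
    using norm_triangle_ineq[of "of_real (1 - t) * g 0" "of_real t * h 0"] nm by simp
  also have "\<dots> \<le> (1 - t) * 1 + t * 1"
    using assms unfolding Bl_def by (intro add_mono mult_left_mono) auto
  finally have 0: "cmod (of_real (1 - t) * g 0 + of_real t * h 0) \<le> 1" by simp
  have "cmod (deriv (\<lambda>w. of_real (1 - t) * g w + of_real t * h w) z) * \<nu> z \<le> 1" if z: "z \<in> ball 0 1" for z
  proof -
    have "cmod (deriv (\<lambda>w. of_real (1 - t) * g w + of_real t * h w) z) * \<nu> z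
        = cmod (of_real (1 - t) * deriv g z + of_real t * deriv h z) * \<nu> z"
      using deriv_lin[OF hg z] by simp
    also have "\<dots> \<le> ((1 - t) * cmod (deriv g z) + t * cmod (deriv h z)) * \<nu> z"
      using nu_nonneg[OF z] norm_triangle_ineq[of "of_real (1 - t) * deriv g z" "of_real t * deriv h z"] nm
      by (intro mult_right_mono) auto
    also have "\<dots> = (1 - t) * (cmod (deriv g z) * \<nu> z) + t * (cmod (deriv h z) * \<nu> z)"
      by (simp add: algebra_simps)
    also have "\<dots> \<le> (1 - t) * 1 + t * 1"
      using assms z unfolding Bl_def by (intro add_mono mult_left_mono) auto
    finally show ?thesis by simp
  qed
  then show ?thesis using hg 0 unfolding Bl_def by (auto intro!: holomorphic_intros)
qed

lemma Bl_scale: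
  assumes "g \<in> Bnu \<nu>" "norm_nu \<nu> g \<le> B" "B > 0" and that: "cmod c * B \<le> 1"
  shows "(\<lambda>w. c * g w) \<in> Bl"
proof -
  have hg: "g holomorphic_on ball 0 1" using assms Bnu_D by auto
  have "cmod (c * g 0) \<le> cmod c * B" using norm_nu_ge0[OF assms(1)] assms
    by (simp add: norm_mult mult_left_mono)
  then have 0: "cmod (c * g 0) \<le> 1" using that by simp
  have "cmod (deriv (\<lambda>w. c * g w) z) * \<nu> z \<le> 1" if z: "z \<in> ball 0 1" for z
  proof -
    have "deriv (\<lambda>w. c * g w) z = c * deriv g z"
      using deriv_lin[OF hg hg z, of c 0] by simp
    then have "cmod (deriv (\<lambda>w. c * g w) z) * \<nu> z = cmod c * (cmod (deriv g z) * \<nu> z)"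
      by (simp add: norm_mult)
    also have "\<dots> \<le> cmod c * B" using norm_nu_ge1[OF assms(1) z] assms
      by (intro mult_left_mono) auto
    finally show ?thesis using \<open>cmod c * B \<le> 1\<close> by simp
  qed
  then show ?thesis using hg 0 unfolding Bl_def by (auto intro!: holomorphic_intros)
qed

lemma Bl_compact:
  fixes gs :: "nat \<Rightarrow> complex \<Rightarrow> complex"
  assumes gs: "\<And>n. gs n \<in> Bl"
  obtains g r where "g \<in> Bl" "strict_mono r" "conv (gs \<circ> r) g"
proof -
  have bnd: "\<exists>B. \<forall>h\<in>Bl. \<forall>z\<in>K. cmod (h z) \<le> B" if K: "compact K" "K \<subseteq> ball 0 1" for K
  proof -
    obtain \<rho> where \<rho>: "0 \<le> \<rho>" "\<rho> < 1" "K \<subseteq> cball 0 \<rho>" using compact_in_ball[OF K] .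
    have cb: "cball 0 \<rho> \<subseteq> ball (0::complex) 1" using \<rho> by auto
    obtain m where m: "m > 0" "\<And>z. z \<in> cball 0 \<rho> \<Longrightarrow> m \<le> \<nu> z"
      using nu_min[OF compact_cball cb] by blast
    have "cmod (h z) \<le> 1 + 1 / m * 1" if h: "h \<in> Bl" and z: "z \<in> K" for h z
    proof -
      have zc: "z \<in> cball 0 \<rho>" using z \<rho> by auto
      have "cmod (h z - h 0) \<le> 1 / m * cmod (z - 0)"
      proof (rule holo_diff_bound[OF _ \<rho>(1,2) _ zc])
        show "h holomorphic_on ball 0 1" using h Bl_def by auto
        show "0 \<in> cball (0::complex) \<rho>" using \<rho> by simp
        fix w assume w: "w \<in> cball (0::complex) \<rho>"
        then have wb: "w \<in> ball 0 1" using cb by auto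
        show "cmod (deriv h w) \<le> 1 / m"
          using deriv_bound_nu[OF wb _ m(2)[OF w] m(1)] h wb unfolding Bl_def by auto
      qed
      also have "\<dots> \<le> 1 / m * 1" using zc \<rho> m by (intro mult_left_mono) auto
      finally have "cmod (h z - h 0) \<le> 1 / m * 1" .
      moreover have "cmod (h 0) \<le> 1" using h Bl_def by auto
      ultimately show ?thesis using norm_triangle_ineq2[of "h z" "h 0"] by linarith
    qed
    then show ?thesis by blast
  qed
  obtain g r where g: "g holomorphic_on ball 0 1" "strict_mono r"
      "\<And>x. x \<in> ball 0 1 \<Longrightarrow> ((\<lambda>n. gs (r n) x) \<longlongrightarrow> g x) sequentially"
      "\<And>K. \<lbrakk>compact K; K \<subseteq> ball 0 1\<rbrakk> \<Longrightarrow> uniform_limit K (gs \<circ> r) g sequentially"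
    using Montel[of "ball 0 1" Bl gs] bnd gs unfolding Bl_def by (auto simp: image_subset_iff)
  have dconv: "(\<lambda>n. deriv (gs (r n)) z) \<longlonglongrightarrow> deriv g z" if z: "z \<in> ball 0 1" for z
  proof -
    obtain \<delta> where \<delta>: "\<delta> > 0" "cball z \<delta> \<subseteq> ball 0 1"
      using open_contains_cball z by (metis open_ball)
    have ul: "uniform_limit (ball z \<delta>) (gs \<circ> r) g sequentially"
      using g(4)[OF compact_cball \<delta>(2)] uniform_limit_on_subset ball_subset_cball by blast
    have "\<forall>n. (gs \<circ> r) n holomorphic_on ball z \<delta>"
    proof
      fix n
      have "gs (r n) holomorphic_on ball 0 1" using gs unfolding Bl_def by auto
      then show "(gs \<circ> r) n holomorphic_on ball z \<delta>"
        using holomorphic_on_subset[OF _ order_trans[OF ball_subset_cball \<delta>(2)]]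
        by (simp add: o_def)
    qed
    then have "eventually (\<lambda>n. (gs \<circ> r) n holomorphic_on ball z \<delta>) sequentially"
      by (simp add: always_eventually)
    from higher_deriv_complex_uniform_limit[OF ul this, where m=1 and z=z] \<delta>
    show ?thesis by (simp add: o_def)
  qed
  have conv: "conv (gs \<circ> r) g" unfolding conv_def using g(3) dconv by (simp add: o_def)
  have "cmod (g 0) \<le> 1"
  proof (rule LIMSEQ_le_const2[OF tendsto_norm[OF g(3)]])
    show "0 \<in> ball (0::complex) 1" by simp
    show "\<exists>N. \<forall>n\<ge>N. cmod (gs (r n) 0) \<le> 1" using gs Bl_def by auto
  qed
  moreover have "cmod (deriv g z) * \<nu> z \<le> 1" if z: "z \<in> ball 0 1" for z
  proof (rule LIMSEQ_le_const2[OF tendsto_mult_right[OF tendsto_norm[OF dconv[OF z]]]])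
    show "\<exists>N. \<forall>n\<ge>N. cmod (deriv (gs (r n)) z) * \<nu> z \<le> 1" using gs Bl_def z by auto
  qed
  ultimately have "g \<in> Bl" using g(1) unfolding Bl_def by auto
  then show ?thesis using that g(2) conv by blast
qed

end



lemma sq_aux:
  fixes a t v :: real
  shows "(max 0 (a - t * v))\<^sup>2 \<le> (max 0 a - t * v)\<^sup>2"
proof (cases "a - t * v \<le> 0")
  case True then show ?thesis by simp
next
  case False
  then have "0 < a - t * v" "a - t * v \<le> max 0 a - t * v" by auto
  then show ?thesis by (simp add: power_mono)
qed

context scal begin

lemma zero_Bl: "(\<lambda>_. 0) \<in> Bl"
  unfolding Bl_def by simp

lemma finite_step:
  fixes y :: "nat \<Rightarrow> (complex \<Rightarrow> complex) \<Rightarrow> real" and n :: nat and \<epsilon> :: real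
  assumes lin: "\<And>j g h t. j < n \<Longrightarrow> g \<in> Bl \<Longrightarrow> h \<in> Bl \<Longrightarrow> 0 \<le> t \<Longrightarrow> t \<le> 1 \<Longrightarrow>
       y j (\<lambda>w. of_real (1 - t) * g w + of_real t * h w) = (1 - t) * y j g + t * y j h"
    and cont: "\<And>j gs g. j < n \<Longrightarrow> (\<And>k. gs k \<in> Bl) \<Longrightarrow> g \<in> Bl \<Longrightarrow> conv gs g \<Longrightarrow>
       (\<lambda>k. y j (gs k)) \<longlonglongrightarrow> y j g"
    and hyp: "\<And>lam. (\<And>j. j < n \<Longrightarrow> lam j \<ge> 0) \<Longrightarrow> (\<Sum>j<n. lam j) = 1 \<Longrightarrow>
       \<exists>g\<in>Bl. (\<Sum>j<n. lam j * y j g) > \<epsilon>"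
  shows "\<exists>g\<in>Bl. \<forall>j<n. y j g \<ge> \<epsilon>"
proof -
  define d where "d g = (\<Sum>j<n. (max 0 (\<epsilon> - y j g))\<^sup>2)" for g
  define m0 where "m0 = Inf (d ` Bl)"
  have bdd: "bdd_below (d ` Bl)" unfolding d_def by (intro bdd_belowI2[of _ 0]) (auto intro: sum_nonneg)
  have ne: "d ` Bl \<noteq> {}" using zero_Bl by auto
  have "\<exists>g\<in>Bl. d g < m0 + 1 / (real k + 1)" for k
  proof -
    have "Inf (d ` Bl) < m0 + 1 / (real k + 1)" unfolding m0_def by simp
    then show ?thesis using cInf_lessD[OF ne] by blast
  qed
  then obtain gs where gs: "\<And>k. gs k \<in> Bl" "\<And>k. d (gs k) < m0 + 1 / (real k + 1)" by metis
  obtain g r where g: "g \<in> Bl" "strict_mono r" "conv (gs \<circ> r) g"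
    by (rule Bl_compact[OF gs(1)])
  have dlim: "(\<lambda>k. d ((gs \<circ> r) k)) \<longlonglongrightarrow> d g"
    unfolding d_def
    by (intro tendsto_intros cont[OF _ _ g(1) g(3)]) (use gs in auto)
  have "d g \<le> m0"
  proof (rule LIMSEQ_le[OF dlim])
    show "(\<lambda>k. m0 + 1 / (real k + 1)) \<longlonglongrightarrow> m0"
      using tendsto_add[OF tendsto_const LIMSEQ_inverse_real_of_nat] by (simp add: inverse_eq_divide add.commute)
    have "d ((gs \<circ> r) k) \<le> m0 + 1 / (real k + 1)" for k
    proof -
      have "real k \<le> real (r k)" using seq_suble[OF g(2)] by simp
      then have "1 / (real (r k) + 1) \<le> 1 / (real k + 1)" by (intro divide_left_mono) auto
      then show ?thesis using gs(2)[of "r k"] by simp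
    qed
    then show "\<exists>N. \<forall>k\<ge>N. d ((gs \<circ> r) k) \<le> m0 + 1 / (real k + 1)" by blast
  qed
  then have dmin: "d g \<le> d h" if "h \<in> Bl" for h
    using cInf_lower[OF _ bdd, of "d h"] that unfolding m0_def by auto
  define \<mu> where "\<mu> j = max 0 (\<epsilon> - y j g)" for j
  show ?thesis
  proof (cases "\<forall>j<n. y j g \<ge> \<epsilon>")
    case True then show ?thesis using g(1) by blast
  next
    case False
    then obtain j0 where j0: "j0 < n" "\<mu> j0 > 0" unfolding \<mu>_def by auto
    define S where "S = (\<Sum>j<n. \<mu> j)"
    have mu_nn: "\<mu> j \<ge> 0" for j unfolding \<mu>_def by simp
    have Spos: "S > 0"
    proof -
      have "\<mu> j0 \<le> S" unfolding S_def using j0 mu_nn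
        by (intro member_le_sum) auto
      then show ?thesis using j0 by simp
    qed
    have key: "(\<Sum>j<n. \<mu> j * y j h) \<le> (\<Sum>j<n. \<mu> j * y j g)" if h: "h \<in> Bl" for h
    proof -
      define v where "v j = y j h - y j g" for j
      define A where "A = (\<Sum>j<n. \<mu> j * v j)"
      define Q where "Q = (\<Sum>j<n. (v j)\<^sup>2)"
      have Qnn: "Q \<ge> 0" unfolding Q_def by (intro sum_nonneg) auto
      have step: "2 * A \<le> t * Q" if t: "0 < t" "t \<le> 1" for t
      proof -
        define gt where "gt = (\<lambda>w. of_real (1 - t) * g w + of_real t * h w)"
        have gt: "gt \<in> Bl" unfolding gt_def using Bl_convex[OF g(1) h] t by simp
        have yj: "y j gt = y j g + t * v j" if "j < n" for j
        proof -
          have "y j gt = (1 - t) * y j g + t * y j h"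
            unfolding gt_def using lin[OF that g(1) h, of t] t by linarith
          then show ?thesis unfolding v_def by (simp add: algebra_simps)
        qed
        have "d g \<le> d gt" by (rule dmin[OF gt])
        also have "d gt = (\<Sum>j<n. (max 0 (\<epsilon> - y j g - t * v j))\<^sup>2)"
          unfolding d_def by (intro sum.cong) (auto simp: yj algebra_simps)
        also have "\<dots> \<le> (\<Sum>j<n. (\<mu> j - t * v j)\<^sup>2)"
          unfolding \<mu>_def by (intro sum_mono sq_aux)
        also have "\<dots> = (\<Sum>j<n. (\<mu> j)\<^sup>2) - 2 * t * A + t\<^sup>2 * Q"
          unfolding A_def Q_def
          by (simp add: power2_eq_square algebra_simps sum.distrib sum_subtractf sum_distrib_left)
        also have "(\<Sum>j<n. (\<mu> j)\<^sup>2) = d g" unfolding d_def \<mu>_def by simp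
        finally have "2 * t * A \<le> t\<^sup>2 * Q" by simp
        then have "t * (2 * A) \<le> t * (t * Q)" by (simp add: power2_eq_square algebra_simps)
        then show ?thesis using t by simp
      qed
      have "A \<le> 0"
      proof (rule ccontr)
        assume "\<not> A \<le> 0"
        then have Ap: "A > 0" by simp
        define t where "t = min 1 (A / (Q + 1))"
        have t: "0 < t" "t \<le> 1" unfolding t_def using Ap Qnn by auto
        have "t * Q \<le> A / (Q + 1) * Q" unfolding t_def using Qnn by (intro mult_right_mono) auto
        also have "\<dots> < A" using Ap Qnn by (simp add: field_simps)
        finally have "t * Q < 2 * A" using Ap by simp
        then show False using step[OF t] by simp
      qed
      then show ?thesis unfolding A_def v_def by (simp add: algebra_simps sum_subtractf)
    qed
    have gval: "(\<Sum>j<n. \<mu> j * y j g) = \<epsilon> * S - (\<Sum>j<n. (\<mu> j)\<^sup>2)"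
    proof -
      have "\<mu> j * y j g = \<mu> j * \<epsilon> - (\<mu> j)\<^sup>2" for j
        unfolding \<mu>_def by (cases "\<epsilon> - y j g \<le> 0") (auto simp: power2_eq_square algebra_simps)
      then show ?thesis unfolding S_def by (simp add: sum_subtractf sum_distrib_left mult.commute)
    qed
    define lam where "lam j = \<mu> j / S" for j
    have "\<exists>h\<in>Bl. (\<Sum>j<n. lam j * y j h) > \<epsilon>"
    proof (rule hyp)
      show "lam j \<ge> 0" for j unfolding lam_def using mu_nn Spos by simp
      show "(\<Sum>j<n. lam j) = 1" unfolding lam_def using Spos by (simp add: sum_divide_distrib[symmetric] S_def)
    qed
    then obtain h where h: "h \<in> Bl" "(\<Sum>j<n. lam j * y j h) > \<epsilon>" by blast
    have "(\<Sum>j<n. lam j * y j h) = (\<Sum>j<n. \<mu> j * y j h) / S"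
      unfolding lam_def by (simp add: sum_divide_distrib)
    also have "\<dots> \<le> (\<epsilon> * S - (\<Sum>j<n. (\<mu> j)\<^sup>2)) / S"
      using key[OF h(1)] gval Spos by (simp add: divide_right_mono)
    also have "\<dots> \<le> \<epsilon> * S / S" using Spos by (intro divide_right_mono) (auto intro: sum_nonneg)
    finally show ?thesis using h(2) Spos by simp
  qed
qed

end



type_synonym atc = "complex \<times> (complex \<times> complex) list"

definition ladd :: "atc \<Rightarrow> atc \<Rightarrow> atc" where
  "ladd L M = (fst L + fst M, snd L @ snd M)"
definition lscale :: "complex \<Rightarrow> atc \<Rightarrow> atc" where
  "lscale t L = (t * fst L, map (\<lambda>(c,w). (t * c, w)) (snd L))"
fun csum :: "(nat \<Rightarrow> atc) \<Rightarrow> nat \<Rightarrow> atc" where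
  "csum f 0 = (0, [])"
| "csum f (Suc n) = ladd (csum f n) (f n)"
definition l1 :: "atc \<Rightarrow> real" where
  "l1 L = cmod (fst L) + sum_list (map (\<lambda>(c,w). cmod c) (snd L))"

lemma l1_ladd: "l1 (ladd L M) \<le> l1 L + l1 M"
  unfolding l1_def ladd_def by (simp add: norm_triangle_ineq)
lemma l1_lscale: "l1 (lscale t L) = cmod t * l1 L"
proof -
  have "sum_list (map (\<lambda>(c,w). cmod c) (map (\<lambda>(c,w). (t * c, w)) xs)) = cmod t * sum_list (map (\<lambda>(c,w). cmod c) xs)" for xs :: "(complex \<times> complex) list"
    by (induction xs) (auto simp: norm_mult algebra_simps)
  then show ?thesis unfolding l1_def lscale_def by (simp add: norm_mult algebra_simps)
qed
lemma l1_csum: "l1 (csum f n) \<le> (\<Sum>j<n. l1 (f j))"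
proof (induction n)
  case 0 then show ?case by (simp add: l1_def)
next
  case (Suc n) then show ?case using l1_ladd[of "csum f n" "f n"] by simp
qed
lemma l1_nonneg: "l1 L \<ge> 0"
proof -
  have "0 \<le> sum_list (map (\<lambda>(c,w). cmod c) xs)" for xs :: "(complex \<times> complex) list"
    by (induction xs) auto
  then show ?thesis unfolding l1_def by (simp add: add_nonneg_nonneg)
qed

context scal begin

definition valid :: "atc \<Rightarrow> bool" where
  "valid L \<longleftrightarrow> (\<forall>(c,w)\<in>set (snd L). w \<in> U)"

definition app :: "atc \<Rightarrow> (complex \<Rightarrow> complex) \<Rightarrow> complex" where
  "app L g = fst L * g 0 + sum_list (map (\<lambda>(c,w). c * of_real (\<nu> w) * deriv g w) (snd L))"

lemma valid_ladd: "valid L \<Longrightarrow> valid M \<Longrightarrow> valid (ladd L M)"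
  unfolding valid_def ladd_def by auto
lemma valid_lscale: "valid L \<Longrightarrow> valid (lscale t L)"
  unfolding valid_def lscale_def by auto
lemma valid_csum: "(\<And>j. j < n \<Longrightarrow> valid (f j)) \<Longrightarrow> valid (csum f n)"
proof (induction n)
  case 0 then show ?case by (simp add: valid_def)
next
  case (Suc n) then show ?case by (simp add: valid_ladd)
qed

lemma app_ladd: "app (ladd L M) g = app L g + app M g"
  unfolding app_def ladd_def by (simp add: algebra_simps)
lemma app_lscale: "app (lscale t L) g = t * app L g"
proof -
  have "sum_list (map (\<lambda>(c,w). c * of_real (\<nu> w) * deriv g w) (map (\<lambda>(c,w). (t * c, w)) xs))
      = t * sum_list (map (\<lambda>(c,w). c * of_real (\<nu> w) * deriv g w) xs)" for xs :: "(complex \<times> complex) list"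
    by (induction xs) (auto simp: algebra_simps)
  then show ?thesis unfolding app_def lscale_def by (simp add: algebra_simps)
qed
lemma app_csum: "app (csum f n) g = (\<Sum>j<n. app (f j) g)"
proof (induction n)
  case 0 then show ?case by (simp add: app_def)
next
  case (Suc n) then show ?case by (simp add: app_ladd)
qed

lemma app_bound:
  assumes "g \<in> Bnu \<nu>" "valid L"
  shows "cmod (app L g) \<le> l1 L * norm_nu \<nu> g"
proof -
  obtain a xs where L: "L = (a, xs)" by (cases L)
  have "cmod (sum_list (map (\<lambda>(c,w). c * of_real (\<nu> w) * deriv g w) xs))
      \<le> sum_list (map (\<lambda>(c,w). cmod c) xs) * norm_nu \<nu> g"
    if "\<forall>(c,w)\<in>set xs. w \<in> U" for xs
    using that
  proof (induction xs)
    case Nil then show ?case by simp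
  next
    case (Cons cw xs)
    obtain c w where cw: "cw = (c, w)" by (cases cw)
    have w: "w \<in> ball 0 1" using Cons.prems cw U_sub by auto
    have "cmod (c * of_real (\<nu> w) * deriv g w) = cmod c * (cmod (deriv g w) * \<nu> w)"
      using nu_nonneg[OF w] by (simp add: norm_mult)
    also have "\<dots> \<le> cmod c * norm_nu \<nu> g"
      using norm_nu_ge1[OF assms(1) w] by (intro mult_left_mono) auto
    finally have 1: "cmod (c * of_real (\<nu> w) * deriv g w) \<le> cmod c * norm_nu \<nu> g" .
    have 2: "cmod (sum_list (map (\<lambda>(c,w). c * of_real (\<nu> w) * deriv g w) xs))
      \<le> sum_list (map (\<lambda>(c,w). cmod c) xs) * norm_nu \<nu> g" using Cons by auto
    show ?case using order_trans[OF norm_triangle_ineq add_mono[OF 1 2]] cw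
      by (simp add: distrib_right)
  qed
  then have 2: "cmod (sum_list (map (\<lambda>(c,w). c * of_real (\<nu> w) * deriv g w) xs))
      \<le> sum_list (map (\<lambda>(c,w). cmod c) xs) * norm_nu \<nu> g" using assms(2) L unfolding valid_def by simp
  have 1: "cmod (a * g 0) \<le> cmod a * norm_nu \<nu> g"
    using norm_nu_ge0[OF assms(1)] by (simp add: norm_mult mult_left_mono)
  show ?thesis using order_trans[OF norm_triangle_ineq add_mono[OF 1 2]] L
    unfolding app_def l1_def by (simp add: distrib_right)
qed

lemma app_lin:
  assumes "g holomorphic_on ball 0 1" "h holomorphic_on ball 0 1" "valid L"
  shows "app L (\<lambda>w. a * g w + b * h w) = a * app L g + b * app L h"
proof -
  obtain c xs where L: "L = (c, xs)" by (cases L)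
  have "sum_list (map (\<lambda>(c,w). c * of_real (\<nu> w) * deriv (\<lambda>w. a * g w + b * h w) w) xs)
    = a * sum_list (map (\<lambda>(c,w). c * of_real (\<nu> w) * deriv g w) xs)
      + b * sum_list (map (\<lambda>(c,w). c * of_real (\<nu> w) * deriv h w) xs)"
    if "\<forall>(c,w)\<in>set xs. w \<in> U" for xs
    using that
  proof (induction xs)
    case Nil then show ?case by simp
  next
    case (Cons cw xs)
    obtain c w where cw: "cw = (c, w)" by (cases cw)
    have w: "w \<in> ball 0 1" using Cons.prems cw U_sub by auto
    show ?case using Cons cw deriv_lin[OF assms(1,2) w, of a b] by (simp add: algebra_simps)
  qed
  then show ?thesis using assms(3) L unfolding app_def valid_def by (simp add: algebra_simps)
qed

lemma app_cont:
  assumes "valid L" "conv gs g"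
  shows "(\<lambda>k. app L (gs k)) \<longlonglongrightarrow> app L g"
proof -
  obtain c xs where L: "L = (c, xs)" by (cases L)
  have "(\<lambda>k. sum_list (map (\<lambda>(c,w). c * of_real (\<nu> w) * deriv (gs k) w) xs))
     \<longlonglongrightarrow> sum_list (map (\<lambda>(c,w). c * of_real (\<nu> w) * deriv g w) xs)"
    if "\<forall>(c,w)\<in>set xs. w \<in> U" for xs
    using that
  proof (induction xs)
    case Nil then show ?case by simp
  next
    case (Cons cw xs)
    obtain c w where cw: "cw = (c, w)" by (cases cw)
    have w: "w \<in> ball 0 1" using Cons.prems cw U_sub by auto
    have "(\<lambda>k. deriv (gs k) w) \<longlonglongrightarrow> deriv g w" using assms(2) w unfolding conv_def by auto
    then show ?case using Cons cw by (auto intro!: tendsto_intros)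
  qed
  moreover have "(\<lambda>k. gs k 0) \<longlonglongrightarrow> g 0" using assms(2) unfolding conv_def by auto
  ultimately show ?thesis using assms(1) L unfolding app_def valid_def by (auto intro!: tendsto_intros)
qed

end



lemma dir_aux:
  fixes z :: complex and K R :: real
  assumes "K \<ge> 0" "\<And>k. k < 4 \<Longrightarrow> 2 * K * Re (\<i> ^ k * z) \<le> R"
  shows "K * cmod z \<le> R"
proof -
  have a: "2 * K * Re z \<le> R" using assms(2)[of 0] by simp
  have b: "2 * K * (- Im z) \<le> R" using assms(2)[of 1] by simp
  have c: "2 * K * (- Re z) \<le> R" using assms(2)[of 2] by (simp add: power2_eq_square)
  have d: "2 * K * Im z \<le> R" using assms(2)[of 3] by (simp add: power3_eq_cube)
  have "K * cmod z \<le> K * (\<bar>Re z\<bar> + \<bar>Im z\<bar>)" using assms(1) cmod_le by (intro mult_left_mono) auto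
  also have "\<dots> \<le> R" using a b c d assms(1) by (cases "Re z \<ge> 0"; cases "Im z \<ge> 0") (auto simp: algebra_simps)
  finally show ?thesis .
qed

context scal begin

definition OKfun :: "((complex \<Rightarrow> complex) \<Rightarrow> complex) \<Rightarrow> real \<Rightarrow> bool" where
  "OKfun \<phi> A \<longleftrightarrow> A \<ge> 0 \<and>
     (\<forall>g\<in>Bnu \<nu>. \<forall>h\<in>Bnu \<nu>. \<forall>a b. \<phi> (\<lambda>w. a * g w + b * h w) = a * \<phi> g + b * \<phi> h) \<and>
     (\<forall>g\<in>Bnu \<nu>. cmod (\<phi> g) \<le> A * norm_nu \<nu> g) \<and>
     (\<forall>gs g. (\<forall>k. gs k \<in> Bnu \<nu>) \<longrightarrow> g \<in> Bnu \<nu> \<longrightarrow> conv gs g \<longrightarrow> (\<lambda>k. \<phi> (gs k)) \<longlonglongrightarrow> \<phi> g)"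

lemma OKfunD:
  assumes "OKfun \<phi> A"
  shows "A \<ge> 0"
    "\<And>g h a b. g \<in> Bnu \<nu> \<Longrightarrow> h \<in> Bnu \<nu> \<Longrightarrow> \<phi> (\<lambda>w. a * g w + b * h w) = a * \<phi> g + b * \<phi> h"
    "\<And>g. g \<in> Bnu \<nu> \<Longrightarrow> cmod (\<phi> g) \<le> A * norm_nu \<nu> g"
    "\<And>gs g. (\<And>k. gs k \<in> Bnu \<nu>) \<Longrightarrow> g \<in> Bnu \<nu> \<Longrightarrow> conv gs g \<Longrightarrow> (\<lambda>k. \<phi> (gs k)) \<longlonglongrightarrow> \<phi> g"
  using assms unfolding OKfun_def by auto

lemma OKfun_scale:
  assumes "OKfun \<phi> A" "g \<in> Bnu \<nu>"
  shows "\<phi> (\<lambda>w. c * g w) = c * \<phi> g"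
  using OKfunD(2)[OF assms(1) assms(2) assms(2), of c 0] by simp

lemma app_scale:
  assumes "g holomorphic_on ball 0 1" "valid L"
  shows "app L (\<lambda>w. c * g w) = c * app L g"
  using app_lin[OF assms(1) assms(1) assms(2), of c 0] by simp

lemma closure_ext:
  fixes q :: "complex \<Rightarrow> real"
  assumes "continuous_on (ball 0 1) q" "T \<subseteq> ball 0 1" "\<And>w. w \<in> T \<Longrightarrow> q w \<le> R"
    "w \<in> closure T" "w \<in> ball 0 1"
  shows "q w \<le> R"
proof -
  obtain x where x: "\<And>k. x k \<in> T" "x \<longlonglongrightarrow> w"
    using assms(4) closure_sequential by blast
  have "isCont q w" using assms(1,5) continuous_on_eq_continuous_at open_ball by blast
  then have "(\<lambda>k. q (x k)) \<longlonglongrightarrow> q w" using x(2) isCont_tendsto_compose by blast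
  then show ?thesis using x(1) assms(3) by (intro LIMSEQ_le_const2) auto
qed

lemma dual_approx:
  assumes ok: "OKfun \<phi> A" and eps: "\<epsilon> > 0"
  shows "\<exists>L. valid L \<and> l1 L \<le> 2 * C * A \<and> (\<forall>g\<in>Bnu \<nu>. cmod (\<phi> g - app L g) \<le> \<epsilon> * norm_nu \<nu> g)"
proof (rule ccontr)
  assume NH0: "\<not> ?thesis"
  have NH: "\<exists>g\<in>Bnu \<nu>. cmod (\<phi> g - app L g) > \<epsilon> * norm_nu \<nu> g" if "valid L" "l1 L \<le> 2 * C * A" for L
    using NH0 that by (meson not_le)
  have A0: "A \<ge> 0" using OKfunD(1)[OF ok] .
  obtain T where T: "countable T" "T \<subseteq> U" "U \<subseteq> closure T"
    using separable[of U] by blast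
  define I where "I = ({None} \<union> Some ` T) \<times> {..<(4::nat)}"
  have Ic: "countable I" unfolding I_def using T(1) by auto
  have "(None, 0) \<in> I" unfolding I_def by auto
  then have Ine: "I \<noteq> {}" by auto
  define e where "e = from_nat_into I"
  have eI: "e j \<in> I" for j unfolding e_def using from_nat_into[OF Ine] .
  have esurj: "\<exists>j. e j = i" if "i \<in> I" for i unfolding e_def using from_nat_into_surj[OF Ic that] by metis
  define atom :: "complex option \<times> nat \<Rightarrow> atc" where
    "atom i = (case fst i of None \<Rightarrow> (of_real (2 * C * A) * \<i> ^ snd i, [])
                 | Some w \<Rightarrow> (0, [(of_real (2 * C * A) * \<i> ^ snd i, w)]))" for i
  have atom_valid: "valid (atom i)" if "i \<in> I" for i
    using that T(2) unfolding I_def atom_def valid_def by (auto split: option.splits)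
  have atom_l1: "l1 (atom i) = 2 * C * A" for i
    using A0 C_pos unfolding atom_def l1_def by (auto split: option.splits simp: norm_mult norm_power)
  define y where "y j g = Re (\<phi> g - app (atom (e j)) g)" for j g
  have hol: "g \<in> Bnu \<nu> \<Longrightarrow> g holomorphic_on ball 0 1" for g using Bnu_D(1) by blast
  have step: "\<exists>g\<in>Bl. \<forall>j<n. y j g \<ge> \<epsilon>" for n
  proof (rule finite_step)
    fix j g h and t :: real
    assume g: "g \<in> Bl" and h: "h \<in> Bl"
    have gB: "g \<in> Bnu \<nu>" "h \<in> Bnu \<nu>" using g h Bl_Bnu by auto
    define gt where "gt = (\<lambda>w. of_real (1 - t) * g w + of_real t * h w)"
    have 1: "\<phi> gt = of_real (1 - t) * \<phi> g + of_real t * \<phi> h"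
      unfolding gt_def by (rule OKfunD(2)[OF ok gB])
    have 2: "app (atom (e j)) gt = of_real (1 - t) * app (atom (e j)) g + of_real t * app (atom (e j)) h"
      unfolding gt_def by (rule app_lin[OF hol[OF gB(1)] hol[OF gB(2)] atom_valid[OF eI[of j]]])
    have "y j gt = (1 - t) * y j g + t * y j h"
      unfolding y_def 1 2 by (simp add: algebra_simps)
    then show "y j (\<lambda>w. of_real (1 - t) * g w + of_real t * h w) = (1 - t) * y j g + t * y j h"
      unfolding gt_def .
  next
    fix j gs g
    assume gs: "\<And>k. gs k \<in> Bl" and g: "g \<in> Bl" and cv: "conv gs g"
    show "(\<lambda>k. y j (gs k)) \<longlonglongrightarrow> y j g"
      unfolding y_def
      by (intro tendsto_intros OKfunD(4)[OF ok] app_cont[OF atom_valid[OF eI] cv])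
        (use gs g Bl_Bnu cv in auto)
  next
    fix lam :: "nat \<Rightarrow> real"
    assume lam0: "\<And>j. j < n \<Longrightarrow> lam j \<ge> 0" and lam1: "(\<Sum>j<n. lam j) = 1"
    define Lc where "Lc = csum (\<lambda>j. lscale (of_real (lam j)) (atom (e j))) n"
    have Lv: "valid Lc" unfolding Lc_def by (intro valid_csum valid_lscale atom_valid eI)
    have "l1 Lc \<le> (\<Sum>j<n. l1 (lscale (of_real (lam j)) (atom (e j))))" unfolding Lc_def by (rule l1_csum)
    also have "\<dots> = (\<Sum>j<n. lam j * (2 * C * A))"
      using lam0 by (intro sum.cong) (auto simp: l1_lscale atom_l1)
    also have "\<dots> = 2 * C * A" using lam1 by (simp add: sum_distrib_right[symmetric])
    finally have Ll: "l1 Lc \<le> 2 * C * A" .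
    obtain g where g: "g \<in> Bnu \<nu>" "cmod (\<phi> g - app Lc g) > \<epsilon> * norm_nu \<nu> g"
      using NH[OF Lv Ll] by blast
    define z0 where "z0 = \<phi> g - app Lc g"
    have Npos: "norm_nu \<nu> g > 0"
    proof (rule ccontr)
      assume "\<not> norm_nu \<nu> g > 0"
      then have N0: "norm_nu \<nu> g = 0" using norm_nu_nonneg[OF g(1)] by simp
      have "cmod (\<phi> g) \<le> 0" using OKfunD(3)[OF ok g(1)] N0 by simp
      moreover have "cmod (app Lc g) \<le> 0" using app_bound[OF g(1) Lv] N0 by simp
      ultimately have "cmod (\<phi> g - app Lc g) \<le> 0" using norm_triangle_ineq4[of "\<phi> g" "app Lc g"] by simp
      then show False using g(2) N0 by simp
    qed
    have z0: "cmod z0 > 0" using g(2) Npos eps z0_def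
      by (smt (verit, ccfv_SIG) mult_pos_pos)
    define c where "c = cnj z0 / of_real (cmod z0 * norm_nu \<nu> g)"
    have cn: "cmod c * norm_nu \<nu> g \<le> 1" using z0 Npos by (simp add: c_def norm_divide del: of_real_mult)
    have g'B: "(\<lambda>w. c * g w) \<in> Bl" by (rule Bl_scale[OF g(1) order_refl Npos cn])
    have cz: "c * z0 = of_real (cmod z0 / norm_nu \<nu> g)"
    proof -
      have "c * z0 = (cnj z0 * z0) / of_real (cmod z0 * norm_nu \<nu> g)" unfolding c_def by simp
      also have "cnj z0 * z0 = of_real ((cmod z0)\<^sup>2)" using complex_norm_square[of z0] by (simp add: mult.commute)
      also have "of_real ((cmod z0)\<^sup>2) / of_real (cmod z0 * norm_nu \<nu> g) = (of_real ((cmod z0)\<^sup>2 / (cmod z0 * norm_nu \<nu> g)) :: complex)"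
        by (simp only: of_real_divide)
      also have "(cmod z0)\<^sup>2 / (cmod z0 * norm_nu \<nu> g) = cmod z0 / norm_nu \<nu> g"
        using z0 Npos by (simp add: power2_eq_square)
      finally show ?thesis .
    qed
    have "(\<Sum>j<n. lam j * y j (\<lambda>w. c * g w))
        = Re (\<Sum>j<n. of_real (lam j) * (\<phi> (\<lambda>w. c * g w) - app (atom (e j)) (\<lambda>w. c * g w)))"
      unfolding y_def by (simp add: Re_sum)
    also have "\<dots> = Re ((\<Sum>j<n. of_real (lam j)) * \<phi> (\<lambda>w. c * g w) - app Lc (\<lambda>w. c * g w))"
      unfolding Lc_def app_csum app_lscale
      by (simp add: algebra_simps sum_subtractf sum_distrib_right)
    also have "(\<Sum>j<n. (of_real (lam j) :: complex)) = 1" using lam1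
      by (metis of_real_1 of_real_sum)
    also have "Re (1 * \<phi> (\<lambda>w. c * g w) - app Lc (\<lambda>w. c * g w)) = Re (c * z0)"
      unfolding z0_def using OKfun_scale[OF ok g(1)] app_scale[OF hol[OF g(1)] Lv]
      by (simp add: algebra_simps)
    also have "\<dots> = cmod z0 / norm_nu \<nu> g" using cz by simp
    finally have "(\<Sum>j<n. lam j * y j (\<lambda>w. c * g w)) = cmod z0 / norm_nu \<nu> g" .
    moreover have "cmod z0 / norm_nu \<nu> g > \<epsilon>" using g(2) Npos unfolding z0_def by (simp add: field_simps)
    ultimately have "(\<Sum>j<n. lam j * y j (\<lambda>w. c * g w)) > \<epsilon>" by simp
    then show "\<exists>g\<in>Bl. (\<Sum>j<n. lam j * y j g) > \<epsilon>" using g'B by blast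
  qed
  then obtain gs where gs: "\<And>n. gs n \<in> Bl" "\<And>n j. j < n \<Longrightarrow> y j (gs n) \<ge> \<epsilon>" by metis
  obtain g r where g: "g \<in> Bl" "strict_mono r" "conv (gs \<circ> r) g"
    by (rule Bl_compact[OF gs(1)])
  have gB: "g \<in> Bnu \<nu>" using g(1) Bl_Bnu by auto
  have ylim: "y j g \<ge> \<epsilon>" for j
  proof -
    have "(\<lambda>k. y j ((gs \<circ> r) k)) \<longlonglongrightarrow> y j g"
      unfolding y_def
      by (intro tendsto_intros OKfunD(4)[OF ok] app_cont[OF atom_valid[OF eI] g(3)])
        (use gs g gB Bl_Bnu in \<open>auto simp: o_def\<close>)
    moreover have "\<forall>k\<ge>Suc j. y j ((gs \<circ> r) k) \<ge> \<epsilon>"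
    proof (intro allI impI)
      fix k assume "k \<ge> Suc j"
      then have "j < r k" using seq_suble[OF g(2), of k] by simp
      then show "y j ((gs \<circ> r) k) \<ge> \<epsilon>" using gs(2) by simp
    qed
    ultimately show ?thesis by (intro LIMSEQ_le_const) auto
  qed
  have atomI: "Re (\<phi> g - app (atom i) g) \<ge> \<epsilon>" if "i \<in> I" for i
    using ylim esurj[OF that] unfolding y_def by auto
  define R where "R = Re (\<phi> g) - \<epsilon>"
  have R0: "C * A * cmod (g 0) \<le> R"
  proof (rule dir_aux)
    show "0 \<le> C * A" using C_pos A0 by simp
    fix k :: nat assume "k < 4"
    then have "(None, k) \<in> I" unfolding I_def by auto
    from atomI[OF this] show "2 * (C * A) * Re (\<i> ^ k * g 0) \<le> R"
      unfolding R_def atom_def app_def by (simp add: algebra_simps)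
  qed
  have R1: "C * A * (cmod (deriv g w) * \<nu> w) \<le> R" if w: "w \<in> T" for w
  proof -
    have wb: "w \<in> ball 0 1" using w T(2) U_sub by auto
    have "C * A * cmod (of_real (\<nu> w) * deriv g w) \<le> R"
    proof (rule dir_aux)
      show "0 \<le> C * A" using C_pos A0 by simp
      fix k :: nat assume "k < 4"
      then have "(Some w, k) \<in> I" unfolding I_def using w by auto
      from atomI[OF this] show "2 * (C * A) * Re (\<i> ^ k * (of_real (\<nu> w) * deriv g w)) \<le> R"
        unfolding R_def atom_def app_def by (simp add: algebra_simps)
    qed
    then show ?thesis using nu_nonneg[OF wb] by (simp add: norm_mult mult.commute)
  qed
  have R2: "C * A * (cmod (deriv g w) * \<nu> w) \<le> R" if w: "w \<in> U" for w
  proof (rule closure_ext[where T=T])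
    have "deriv g holomorphic_on ball 0 1" using g(1) Bl_def holomorphic_deriv open_ball by blast
    then show "continuous_on (ball 0 1) (\<lambda>w. C * A * (cmod (deriv g w) * \<nu> w))"
      by (intro continuous_intros nu_cont holomorphic_on_imp_continuous_on)
    show "T \<subseteq> ball 0 1" using T(2) U_sub by auto
  qed (use R1 w T U_sub in auto)
  have Rnn: "R \<ge> 0" using R0 C_pos A0 by (smt (verit) mult_nonneg_nonneg norm_ge_zero)
  have RS: "C * A * max (cmod (g 0)) (sup0 (\<lambda>z. cmod (deriv g z) * \<nu> z) U) \<le> R"
  proof (cases "A = 0")
    case True then show ?thesis using Rnn by simp
  next
    case False
    then have CA: "C * A > 0" using A0 C_pos by simp
    have "sup0 (\<lambda>z. cmod (deriv g z) * \<nu> z) U \<le> R / (C * A)"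
      using CA Rnn R2 by (intro sup0_least) (auto simp: field_simps)
    then have "C * A * sup0 (\<lambda>z. cmod (deriv g z) * \<nu> z) U \<le> R" using CA by (simp add: field_simps)
    then show ?thesis using R0 by (simp add: max_def)
  qed
  have "A * norm_nu \<nu> g \<le> A * (C * max (cmod (g 0)) (sup0 (\<lambda>z. cmod (deriv g z) * \<nu> z) U))"
    using samp gB A0 by (intro mult_left_mono) auto
  also have "\<dots> \<le> R" using RS by (simp add: algebra_simps)
  also have "\<dots> \<le> cmod (\<phi> g) - \<epsilon>" unfolding R_def using complex_Re_le_cmod by simp
  also have "\<dots> \<le> A * norm_nu \<nu> g - \<epsilon>" using OKfunD(3)[OF ok gB] by simp
  finally show False using eps by simp
qed

end



lemma geo_tail: "(\<Sum>k\<in>{n..<m}. (1/2::real) ^ k) \<le> 2 * (1/2) ^ n"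
proof (cases "n \<le> m")
  case True
  have g: "(\<Sum>k<j. (1/2::real) ^ k) = 2 - 2 * (1/2) ^ j" for j
    using geometric_sum[of "1/2::real" j] by (simp add: field_simps)
  have "(\<Sum>k\<in>{n..<m}. (1/2::real) ^ k) = (\<Sum>k<m. (1/2) ^ k) - (\<Sum>k<n. (1/2) ^ k)"
    using True by (simp add: sum_diff_nat_ivl lessThan_atLeast0)
  also have "\<dots> = 2 * (1/2) ^ n - 2 * (1/2) ^ m" using g by simp
  finally show ?thesis by simp
next
  case False then show ?thesis by simp
qed

locale main = lcs sc p + scal \<nu> U C
  for sc :: "complex \<Rightarrow> 'e::ab_group_add \<Rightarrow> 'e" and p :: "'i \<Rightarrow> 'e \<Rightarrow> real"
    and \<nu> U C +
  fixes G :: "('e \<Rightarrow> complex) set" and f0 :: 'e and f1 :: "complex \<Rightarrow> 'e"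
  assumes loc_compl: "locally_complete sc p"
    and G_dual: "G \<subseteq> dual_lc sc p"
    and G_sep: "\<forall>x. (\<forall>e\<in>G. e x = 0) \<longrightarrow> x = 0"
    and f_bdd: "\<forall>i. bdd_above ((\<lambda>z. p i (f1 z) * \<nu> z) ` U)"
    and f_weak: "\<forall>e\<in>G. \<exists>g\<in>Bnu \<nu>. g 0 = e f0 \<and> (\<forall>z\<in>U. deriv g z = e (f1 z))"
begin

definition M where "M i = max (p i f0) (sup0 (\<lambda>w. p i (f1 w) * \<nu> w) U)"
definition Dset where "Dset = {x. \<forall>i. p i x \<le> M i}"
definition ge where "ge e = (SOME g. g \<in> Bnu \<nu> \<and> g 0 = e f0 \<and> (\<forall>z\<in>U. deriv g z = e (f1 z)))"
definition Ev :: "atc \<Rightarrow> 'e" where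
  "Ev L = sc (fst L) f0 + sum_list (map (\<lambda>(c,w). sc (c * of_real (\<nu> w)) (f1 w)) (snd L))"

lemma M_f0: "p i f0 \<le> M i" unfolding M_def by simp
lemma M_f1: "w \<in> U \<Longrightarrow> p i (f1 w) * \<nu> w \<le> M i"
  unfolding M_def using sup0_upper[OF f_bdd[rule_format]] by (meson max.coboundedI2)
lemma M_nonneg: "M i \<ge> 0" using M_f0[of i] p_nonneg[of i f0] by linarith

lemma ge: "e \<in> G \<Longrightarrow> ge e \<in> Bnu \<nu> \<and> ge e 0 = e f0 \<and> (\<forall>z\<in>U. deriv (ge e) z = e (f1 z))"
proof -
  assume "e \<in> G"
  then have "\<exists>g. g \<in> Bnu \<nu> \<and> g 0 = e f0 \<and> (\<forall>z\<in>U. deriv g z = e (f1 z))" using f_weak by blast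
  then show ?thesis unfolding ge_def by (rule someI_ex)
qed

lemma sep_eq: "(\<And>e. e \<in> G \<Longrightarrow> e x = e y) \<Longrightarrow> x = y"
proof -
  assume h: "\<And>e. e \<in> G \<Longrightarrow> e x = e y"
  have "e (x - y) = 0" if "e \<in> G" for e using h[OF that] dual_diff[of e x y] G_dual that by auto
  then have "x - y = 0" using G_sep by blast
  then show "x = y" by simp
qed

lemma Ev_ladd: "Ev (ladd L L') = Ev L + Ev L'"
  unfolding Ev_def ladd_def by (simp add: sc_add2 algebra_simps)

lemma Ev_bound: "valid L \<Longrightarrow> p i (Ev L) \<le> l1 L * M i"
proof -
  assume v: "valid L"
  obtain a xs where L: "L = (a, xs)" by (cases L)
  have "p i (sum_list (map (\<lambda>(c,w). sc (c * of_real (\<nu> w)) (f1 w)) xs)) \<le> sum_list (map (\<lambda>(c,w). cmod c) xs) * M i"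
    if "\<forall>(c,w)\<in>set xs. w \<in> U" for xs
    using that
  proof (induction xs)
    case Nil then show ?case by simp
  next
    case (Cons cw xs)
    obtain c w where cw: "cw = (c, w)" by (cases cw)
    have wU: "w \<in> U" using Cons.prems cw by auto
    have w: "w \<in> ball 0 1" using wU U_sub by auto
    have "p i (sc (c * of_real (\<nu> w)) (f1 w)) = cmod c * (p i (f1 w) * \<nu> w)"
      using nu_nonneg[OF w] by (simp add: p_sc norm_mult)
    also have "\<dots> \<le> cmod c * M i" using M_f1[OF wU] by (intro mult_left_mono) auto
    finally have 1: "p i (sc (c * of_real (\<nu> w)) (f1 w)) \<le> cmod c * M i" .
    have 2: "p i (sum_list (map (\<lambda>(c,w). sc (c * of_real (\<nu> w)) (f1 w)) xs)) \<le> sum_list (map (\<lambda>(c,w). cmod c) xs) * M i"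
      using Cons by auto
    show ?case using order_trans[OF p_tri add_mono[OF 1 2]] cw by (simp add: distrib_right)
  qed
  then have 2: "p i (sum_list (map (\<lambda>(c,w). sc (c * of_real (\<nu> w)) (f1 w)) xs)) \<le> sum_list (map (\<lambda>(c,w). cmod c) xs) * M i"
    using v L unfolding valid_def by simp
  have 1: "p i (sc a f0) \<le> cmod a * M i" using M_f0[of i] by (simp add: p_sc mult_left_mono)
  show ?thesis using order_trans[OF p_tri add_mono[OF 1 2]] L unfolding Ev_def l1_def by (simp add: distrib_right)
qed

lemma Ev_e:
  assumes "e \<in> G" "valid L"
  shows "e (Ev L) = app L (ge e)"
proof -
  have ed: "e \<in> dual_lc sc p" using assms G_dual by auto
  obtain a xs where L: "L = (a, xs)" by (cases L)
  have "e (sum_list (map (\<lambda>(c,w). sc (c * of_real (\<nu> w)) (f1 w)) xs)) = sum_list (map (\<lambda>(c,w). c * of_real (\<nu> w) * deriv (ge e) w) xs)"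
    if "\<forall>(c,w)\<in>set xs. w \<in> U" for xs
    using that
  proof (induction xs)
    case Nil then show ?case using dual_0[OF ed] by simp
  next
    case (Cons cw xs)
    obtain c w where cw: "cw = (c, w)" by (cases cw)
    have wU: "w \<in> U" using Cons.prems cw by auto
    show ?case using Cons cw ge[OF assms(1)] wU by (simp add: dual_add[OF ed] dual_sc[OF ed])
  qed
  then show ?thesis using assms(2) L ge[OF assms(1)] unfolding valid_def Ev_def app_def
    by (simp add: dual_add[OF ed] dual_sc[OF ed])
qed

lemma Ev_sum: "Ev (csum f n) = (\<Sum>j<n. Ev (f j))"
proof (induction n)
  case 0 then show ?case by (simp add: Ev_def)
next
  case (Suc n) then show ?case by (simp add: Ev_ladd)
qed

lemma D_closed: "closed_lc p Dset"
  unfolding closed_lc_def Dset_def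
proof (intro allI impI)
  fix x assume h: "\<forall>i. \<forall>\<epsilon>>0. \<exists>y\<in>{x. \<forall>i. p i x \<le> M i}. p i (x - y) < \<epsilon>"
  have "p i x \<le> M i + \<epsilon>" if "\<epsilon> > 0" for \<epsilon> i
  proof -
    have "\<exists>y\<in>{x. \<forall>i. p i x \<le> M i}. p i (x - y) < \<epsilon>" using h that by blast
    then obtain y where y: "\<forall>i. p i y \<le> M i" "p i (x - y) < \<epsilon>" by auto
    have "p i x \<le> p i (x - y) + p i y" using p_tri[of i "x - y" y] by simp
    then show ?thesis using y by (smt (verit))
  qed
  then have "p i x \<le> M i" for i by (meson field_le_epsilon)
  then show "x \<in> {x. \<forall>i. p i x \<le> M i}" by simp
qed

lemma D_bounded: "bounded_lc p Dset"
  unfolding bounded_lc_def Dset_def by blast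

lemma D_absconv: "abs_convex_lc sc Dset"
  unfolding abs_convex_lc_def Dset_def
proof (intro ballI allI impI)
  fix x y a b assume x: "x \<in> {x. \<forall>i. p i x \<le> M i}" and y: "y \<in> {x. \<forall>i. p i x \<le> M i}"
    and ab: "cmod a + cmod b \<le> 1"
  have "p i (sc a x + sc b y) \<le> M i" for i
  proof -
  have "p i (sc a x + sc b y) \<le> cmod a * p i x + cmod b * p i y" using p_tri[of i "sc a x" "sc b y"] by (simp add: p_sc)
  also have "\<dots> \<le> cmod a * M i + cmod b * M i" using x y by (intro add_mono mult_left_mono) auto
  also have "\<dots> \<le> M i" using mult_right_mono[OF ab M_nonneg[of i]] by (simp add: distrib_right)
  finally show "p i (sc a x + sc b y) \<le> M i" .
  qed
  then show "sc a x + sc b y \<in> {x. \<forall>i. p i x \<le> M i}" by auto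
qed

lemma sc_inv:
  assumes "t > 0"
  shows "sc (of_real t) (sc (of_real (1/t)) x) = x"
  using assms by (simp add: sc_mult)

lemma in_scD: "t > 0 \<Longrightarrow> (\<forall>i. p i x \<le> t * M i) \<Longrightarrow> x \<in> sc (of_real t) ` Dset"
proof -
  assume t: "t > 0" and h: "\<forall>i. p i x \<le> t * M i"
  have "p i (sc (of_real (1/t)) x) \<le> M i" for i
  proof -
    have "p i (sc (of_real (1/t)) x) = p i x / t" using t by (simp add: p_sc norm_divide)
    also have "\<dots> \<le> M i" using h t by (simp add: field_simps)
    finally show ?thesis .
  qed
  then have "sc (of_real (1/t)) x \<in> Dset" unfolding Dset_def by blast
  then show ?thesis using sc_inv[OF t, of x] by (metis image_eqI)
qed

lemma span_I: "t \<ge> 0 \<Longrightarrow> (\<forall>i. p i x \<le> t * M i) \<Longrightarrow> x \<in> span_lc sc Dset"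
proof -
  assume t: "t \<ge> 0" and h: "\<forall>i. p i x \<le> t * M i"
  define k where "k = nat (ceiling t) + 1"
  have kt: "real k \<ge> t" "real k > 0" unfolding k_def by linarith+
  have "\<forall>i. p i x \<le> real k * M i" using h kt M_nonneg by (meson mult_right_mono order_trans)
  then have "x \<in> sc (of_real (real k)) ` Dset" using in_scD kt by blast
  then show ?thesis unfolding span_lc_def by auto
qed

lemma gauge_le:
  assumes "t \<ge> 0" "\<forall>i. p i x \<le> t * M i"
  shows "gauge_lc sc Dset x \<le> t"
proof -
  have bdd: "bdd_below {t::real. t > 0 \<and> x \<in> sc (complex_of_real t) ` Dset}"
    by (intro bdd_belowI[of _ 0]) auto
  have "gauge_lc sc Dset x \<le> t + \<delta>" if "\<delta> > 0" for \<delta>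
  proof -
    have "\<forall>i. p i x \<le> (t + \<delta>) * M i" using assms that M_nonneg
      by (smt (verit) mult_right_mono)
    then have "x \<in> sc (of_real (t + \<delta>)) ` Dset" using assms that by (intro in_scD) auto
    then have mem: "t + \<delta> \<in> {t::real. t > 0 \<and> x \<in> sc (complex_of_real t) ` Dset}"
      using assms that by (simp del: of_real_add)
    show ?thesis unfolding gauge_lc_def using cInf_lower[OF mem bdd] .
  qed
  then show ?thesis by (meson field_le_epsilon)
qed

lemma gauge_lt:
  assumes "x \<in> span_lc sc Dset" "gauge_lc sc Dset x < t"
  shows "p i x \<le> t * M i"
proof -
  obtain n d where nd: "d \<in> Dset" "x = sc (of_nat n) d" using assms(1) unfolding span_lc_def by auto
  have ne: "{t::real. t > 0 \<and> x \<in> sc (complex_of_real t) ` Dset} \<noteq> {}"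
  proof (cases "n = 0")
    case True
    then have "x = sc (of_real 1) 0" using nd by simp
    moreover have "0 \<in> Dset" unfolding Dset_def using M_nonneg by simp
    ultimately have "x \<in> sc (of_real 1) ` Dset" by (rule image_eqI)
    then have "(1::real) \<in> {t::real. t > 0 \<and> x \<in> sc (complex_of_real t) ` Dset}" by simp
    then show ?thesis by blast
  next
    case False
    then have "real n > 0" by simp
    moreover have "x = sc (of_real (real n)) d" using nd by simp
    then have "x \<in> sc (of_real (real n)) ` Dset" using nd(1) by (rule image_eqI)
    ultimately have "real n \<in> {t::real. t > 0 \<and> x \<in> sc (complex_of_real t) ` Dset}" by simp
    then show ?thesis by blast
  qed
  obtain s where s: "s > 0" "x \<in> sc (of_real s) ` Dset" "s < t"
    using cInf_lessD[OF ne assms(2)[unfolded gauge_lc_def]] by blast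
  obtain d' where d': "d' \<in> Dset" "x = sc (of_real s) d'" using s(2) by blast
  have "p i x = s * p i d'" using d' s by (simp add: p_sc)
  also have "\<dots> \<le> s * M i" using d' s unfolding Dset_def by (simp add: mult_left_mono)
  also have "\<dots> \<le> t * M i" using s M_nonneg by (simp add: mult_right_mono)
  finally show ?thesis .
qed

lemma span_bound: "x \<in> span_lc sc Dset \<Longrightarrow> \<exists>k\<ge>0. \<forall>i. p i x \<le> k * M i"
proof -
  assume "x \<in> span_lc sc Dset"
  then obtain n d where nd: "d \<in> Dset" "x = sc (of_nat n) d" unfolding span_lc_def by auto
  have "\<forall>i. p i x \<le> real n * M i" using nd unfolding Dset_def by (simp add: p_sc mult_left_mono)
  then show ?thesis by (intro exI[of _ "real n"]) auto
qed

end



context main begin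

lemma cmod_le_eps: "(\<And>\<eta>. \<eta> > 0 \<Longrightarrow> cmod z \<le> \<eta>) \<Longrightarrow> z = 0"
  by (metis field_le_epsilon add_0 norm_le_zero_iff)

lemma rep:
  assumes ok: "OKfun \<phi> A" and A: "A > 0"
  shows "\<exists>x. (\<forall>e\<in>G. e x = \<phi> (ge e)) \<and> (\<forall>i. p i x \<le> 4 * C * A * M i)"
proof -
  define Lsel where "Lsel B \<psi> = (SOME L. valid L \<and> l1 L \<le> 2 * C * B \<and>
      (\<forall>g\<in>Bnu \<nu>. cmod (\<psi> g - app L g) \<le> (B / 2) * norm_nu \<nu> g))" for B \<psi>
  have Lsel: "valid (Lsel B \<psi>) \<and> l1 (Lsel B \<psi>) \<le> 2 * C * B \<and>
      (\<forall>g\<in>Bnu \<nu>. cmod (\<psi> g - app (Lsel B \<psi>) g) \<le> (B / 2) * norm_nu \<nu> g)"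
    if "OKfun \<psi> B" "B > 0" for \<psi> B
    unfolding Lsel_def by (rule someI_ex) (rule dual_approx[OF that(1)], use that in simp)
  have hol: "g \<in> Bnu \<nu> \<Longrightarrow> g holomorphic_on ball 0 1" for g using Bnu_D(1) by blast
  have okstep: "OKfun (\<lambda>g. \<psi> g - app (Lsel B \<psi>) g) (B / 2)" if ok': "OKfun \<psi> B" and B: "B > 0" for \<psi> B
  proof -
    note L = Lsel[OF ok' B]
    show ?thesis unfolding OKfun_def
    proof (intro conjI ballI allI impI)
      show "0 \<le> B / 2" using B by simp
      fix g h a b assume g: "g \<in> Bnu \<nu>" and h: "h \<in> Bnu \<nu>"
      show "\<psi> (\<lambda>w. a * g w + b * h w) - app (Lsel B \<psi>) (\<lambda>w. a * g w + b * h w)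
          = a * (\<psi> g - app (Lsel B \<psi>) g) + b * (\<psi> h - app (Lsel B \<psi>) h)"
        using OKfunD(2)[OF ok' g h] app_lin[OF hol[OF g] hol[OF h], of "Lsel B \<psi>" a b] L
        by (simp add: algebra_simps)
    next
      fix g assume g: "g \<in> Bnu \<nu>"
      show "cmod (\<psi> g - app (Lsel B \<psi>) g) \<le> B / 2 * norm_nu \<nu> g" using L g by blast
    next
      fix gs g assume "\<forall>k. gs k \<in> Bnu \<nu>" "g \<in> Bnu \<nu>" "conv gs g"
      then show "(\<lambda>k. \<psi> (gs k) - app (Lsel B \<psi>) (gs k)) \<longlonglongrightarrow> \<psi> g - app (Lsel B \<psi>) g"
        using L by (intro tendsto_diff OKfunD(4)[OF ok'] app_cont) auto
    qed
  qed
  define B where "B n = A * (1/2) ^ n" for n :: nat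
  have Bpos: "B n > 0" for n unfolding B_def using A by simp
  define R where "R = rec_nat \<phi> (\<lambda>n \<psi> g. \<psi> g - app (Lsel (B n) \<psi>) g)"
  have R0: "R 0 = \<phi>" unfolding R_def by simp
  have RS: "R (Suc n) = (\<lambda>g. R n g - app (Lsel (B n) (R n)) g)" for n unfolding R_def by simp
  have okR: "OKfun (R n) (B n)" for n
  proof (induction n)
    case 0 then show ?case using ok by (simp add: R0 B_def)
  next
    case (Suc n)
    have h: "B n / 2 = B (Suc n)" unfolding B_def by simp
    show ?case unfolding RS h[symmetric] by (rule okstep[OF Suc Bpos])
  qed
  define Ls where "Ls n = Lsel (B n) (R n)" for n
  have Ls: "valid (Ls n)" "l1 (Ls n) \<le> 2 * C * B n" for n
    using Lsel[OF okR Bpos] unfolding Ls_def by auto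
  have tele: "R n g = \<phi> g - (\<Sum>m<n. app (Ls m) g)" for n g
    by (induction n) (auto simp: R0 RS Ls_def)
  define xs where "xs n = (\<Sum>m<n. Ev (Ls m))" for n
  have e_xs: "e (xs n) = \<phi> (ge e) - R n (ge e)" if e: "e \<in> G" for e n
  proof -
    have ed: "e \<in> dual_lc sc p" using e G_dual by auto
    have "e (xs n) = (\<Sum>m<n. e (Ev (Ls m)))" unfolding xs_def by (rule dual_sum[OF ed])
    also have "\<dots> = (\<Sum>m<n. app (Ls m) (ge e))" using Ev_e[OF e Ls(1)] by simp
    finally show ?thesis unfolding tele by simp
  qed
  have pd: "p i (xs m - xs n) \<le> 4 * C * A * (1/2) ^ n * M i" if nm: "n \<le> m" for i m n
  proof -
    have "xs m - xs n = (\<Sum>k\<in>{n..<m}. Ev (Ls k))"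
      unfolding xs_def using sum_diff_nat_ivl[of 0 n m "\<lambda>k. Ev (Ls k)"] nm by (simp add: atLeast0LessThan)
    then have "p i (xs m - xs n) \<le> (\<Sum>k\<in>{n..<m}. p i (Ev (Ls k)))" using p_sum by simp
    also have "\<dots> \<le> (\<Sum>k\<in>{n..<m}. (2 * C * A * M i) * (1/2) ^ k)"
    proof (intro sum_mono)
      fix k
      have "p i (Ev (Ls k)) \<le> l1 (Ls k) * M i" by (rule Ev_bound[OF Ls(1)])
      also have "\<dots> \<le> 2 * C * B k * M i" using Ls(2) M_nonneg by (intro mult_right_mono) auto
      finally show "p i (Ev (Ls k)) \<le> (2 * C * A * M i) * (1/2) ^ k" by (simp add: B_def mult_ac)
    qed
    also have "\<dots> = (2 * C * A * M i) * (\<Sum>k\<in>{n..<m}. (1/2) ^ k)" by (simp add: sum_distrib_left)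
    also have "\<dots> \<le> (2 * C * A * M i) * (2 * (1/2) ^ n)"
      using C_pos A M_nonneg geo_tail by (intro mult_left_mono) auto
    finally show ?thesis by (simp add: algebra_simps)
  qed
  have pxs: "p i (xs n) \<le> 4 * C * A * M i" for i n
  proof -
    have "p i (xs n - xs 0) \<le> 4 * C * A * (1/2) ^ 0 * M i" by (rule pd) simp
    then show ?thesis by (simp add: xs_def)
  qed
  have CA: "4 * C * A > 0" using C_pos A by simp
  have xs_span: "xs n \<in> span_lc sc Dset" for n using pxs CA by (intro span_I[of "4 * C * A"]) auto
  have cauchy: "\<exists>N. \<forall>m\<ge>N. \<forall>n\<ge>N. gauge_lc sc Dset (xs m - xs n) < \<epsilon>" if eps: "\<epsilon> > 0" for \<epsilon>
  proof -
    have "(\<lambda>n. 4 * C * A * (1/2::real) ^ n) \<longlonglongrightarrow> 4 * C * A * 0"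
      by (intro tendsto_intros) simp
    then have "eventually (\<lambda>n. 4 * C * A * (1/2::real) ^ n < \<epsilon>) sequentially"
      using eps by (auto dest: order_tendstoD)
    then obtain N where N: "4 * C * A * (1/2::real) ^ N < \<epsilon>" by (auto simp: eventually_sequentially)
    have "gauge_lc sc Dset (xs m - xs n) < \<epsilon>" if "m \<ge> N" "n \<ge> N" for m n
    proof -
      have "p i (xs m - xs n) \<le> 4 * C * A * (1/2) ^ N * M i" for i
      proof -
        have q: "4 * C * A * (1/2) ^ a * M i \<le> 4 * C * A * (1/2) ^ N * M i" if "a \<ge> N" for a
        proof -
          have "(1/2::real) ^ a \<le> (1/2) ^ N" using that by (intro power_decreasing) auto
          then have "4 * C * A * (1/2::real) ^ a \<le> 4 * C * A * (1/2) ^ N" using CA by (intro mult_left_mono) auto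
          then show ?thesis using M_nonneg[of i] by (intro mult_right_mono) auto
        qed
        show ?thesis
        proof (cases "n \<le> m")
          case True
          show ?thesis using pd[OF True, of i] q[OF \<open>n \<ge> N\<close>] by linarith
        next
          case False
          then have "m \<le> n" by simp
          from pd[OF this, of i] have "p i (xs n - xs m) \<le> 4 * C * A * (1/2) ^ m * M i" .
          then show ?thesis using q[OF \<open>m \<ge> N\<close>] p_commute[of i "xs m" "xs n"] by linarith
        qed
      qed
      then have "gauge_lc sc Dset (xs m - xs n) \<le> 4 * C * A * (1/2) ^ N"
        using CA by (intro gauge_le) auto
      then show ?thesis using N by simp
    qed
    then show ?thesis by blast
  qed
  obtain x where x: "x \<in> span_lc sc Dset" "(\<lambda>n. gauge_lc sc Dset (xs n - x)) \<longlonglongrightarrow> 0"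
    using loc_compl D_closed D_bounded D_absconv xs_span cauchy unfolding locally_complete_def by blast
  obtain k where k: "k \<ge> 0" "\<forall>i. p i x \<le> k * M i" using span_bound[OF x(1)] by blast
  have diff_span: "xs n - x \<in> span_lc sc Dset" for n
  proof (rule span_I[of "4 * C * A + k"])
    show "0 \<le> 4 * C * A + k" using CA k by simp
    show "\<forall>i. p i (xs n - x) \<le> (4 * C * A + k) * M i"
      using p_diff_le pxs k(2) by (smt (verit) distrib_right)
  qed
  have pconv: "eventually (\<lambda>n. p i (xs n - x) \<le> \<delta> * M i) sequentially" if "\<delta> > 0" for \<delta> i
  proof -
    have "eventually (\<lambda>n. gauge_lc sc Dset (xs n - x) < \<delta>) sequentially"
      using order_tendstoD(2)[OF x(2) that] .
    then show ?thesis using gauge_lt[OF diff_span] by (auto elim: eventually_mono)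
  qed
  have pbound: "p i x \<le> 4 * C * A * M i" for i
  proof -
    have "p i x \<le> 4 * C * A * M i + \<eta>" if eta: "\<eta> > 0" for \<eta>
    proof -
      define \<delta> where "\<delta> = \<eta> / (M i + 1)"
      have dpos: "\<delta> > 0" unfolding \<delta>_def using eta M_nonneg[of i] by simp
      have dM: "\<delta> * M i \<le> \<eta>" unfolding \<delta>_def using eta M_nonneg[of i] by (simp add: field_simps)
      obtain n where n: "p i (xs n - x) \<le> \<delta> * M i" using pconv[OF dpos, of i] unfolding eventually_sequentially by blast
      have "p i x \<le> p i (xs n) + p i (xs n - x)"
        using p_diff_le[of i "xs n" "xs n - x"] by simp
      then show ?thesis using pxs[of i n] n dM by simp
    qed
    then show ?thesis by (meson field_le_epsilon)
  qed
  have eval: "e x = \<phi> (ge e)" if e: "e \<in> G" for e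
  proof -
    have ed: "e \<in> dual_lc sc p" using e G_dual by auto
    obtain K j where K: "K \<ge> 0" "\<And>y. cmod (e y) \<le> K * p j y" by (rule dual_bound[OF ed]) (rule that)
    have geB: "ge e \<in> Bnu \<nu>" using ge[OF e] by simp
    have "cmod (e x - \<phi> (ge e)) \<le> \<eta>" if eta: "\<eta> > 0" for \<eta>
    proof -
      define \<delta> where "\<delta> = \<eta> / (2 * (K * M j + 1))"
      have "K * M j \<ge> 0" using K M_nonneg[of j] by simp
      then have dpos: "\<delta> > 0" unfolding \<delta>_def using eta by (intro divide_pos_pos) auto
      have dM: "K * (\<delta> * M j) \<le> \<eta> / 2"
      proof -
        have "K * (\<delta> * M j) = \<eta> * (K * M j) / (2 * (K * M j + 1))" unfolding \<delta>_def by simp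
        also have "\<dots> \<le> \<eta> * (K * M j + 1) / (2 * (K * M j + 1))"
          using eta K M_nonneg[of j] by (intro divide_right_mono mult_left_mono) auto
        also have "\<dots> = \<eta> / 2"
        proof -
          have nz: "K * M j + 1 \<noteq> 0" using \<open>K * M j \<ge> 0\<close> by simp
          then show ?thesis by (simp add: field_simps)
        qed
        finally show ?thesis .
      qed
      have "(\<lambda>n. A * (1/2::real) ^ n * norm_nu \<nu> (ge e)) \<longlonglongrightarrow> A * 0 * norm_nu \<nu> (ge e)"
        by (intro tendsto_intros) simp
      then have ev2: "eventually (\<lambda>n. A * (1/2::real) ^ n * norm_nu \<nu> (ge e) < \<eta> / 2) sequentially"
        using eta order_tendstoD(2)[of _ 0 sequentially "\<eta> / 2"] by simp
      obtain n where n: "p j (xs n - x) \<le> \<delta> * M j" "A * (1/2::real) ^ n * norm_nu \<nu> (ge e) < \<eta> / 2"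
        using eventually_conj[OF pconv[OF dpos, of j] ev2] unfolding eventually_sequentially by blast
      have "e x - \<phi> (ge e) = - (e (xs n - x)) - R n (ge e)"
      proof -
        have 1: "e (xs n - x) = e (xs n) - e x" by (rule dual_diff[OF ed])
        show ?thesis unfolding 1 using e_xs[OF e, of n] by (simp add: algebra_simps)
      qed
      then have "cmod (e x - \<phi> (ge e)) \<le> cmod (e (xs n - x)) + cmod (R n (ge e))"
        by (metis norm_minus_cancel norm_triangle_ineq4)
      also have "\<dots> \<le> K * p j (xs n - x) + B n * norm_nu \<nu> (ge e)"
        using K(2) OKfunD(3)[OF okR geB] by (intro add_mono) auto
      also have "\<dots> \<le> K * (\<delta> * M j) + A * (1/2) ^ n * norm_nu \<nu> (ge e)"
        using n(1) K(1) by (intro add_mono mult_left_mono) (auto simp: B_def)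
      also have "\<dots> \<le> \<eta>" using dM n(2) by simp
      finally show ?thesis .
    qed
    then have "e x - \<phi> (ge e) = 0" by (intro cmod_le_eps)
    then show ?thesis by simp
  qed
  show ?thesis using eval pbound by blast
qed

end



lemma holo_diff_bound_gen:
  assumes hol: "g holomorphic_on ball 0 1" and S: "convex S" "S \<subseteq> ball 0 1"
    and bd: "\<And>z. z \<in> S \<Longrightarrow> cmod (deriv g z) \<le> B"
    and z: "z \<in> S" and w: "w \<in> S"
  shows "cmod (g z - g w) \<le> B * cmod (z - w)"
proof (rule field_differentiable_bound[OF S(1) _ bd z w])
  fix x assume x: "x \<in> S"
  then have "x \<in> ball 0 1" using S by auto
  then have "g field_differentiable at x"
    using hol holomorphic_on_imp_differentiable_at by auto
  then show "(g has_field_derivative deriv g x) (at x within S)"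
    using DERIV_deriv_iff_field_differentiable has_field_derivative_at_within by blast
qed

context scal begin

lemma ok_eval:
  assumes z: "z \<in> ball 0 1"
  shows "\<exists>A>0. OKfun (\<lambda>g. g z) A"
proof -
  define \<rho> where "\<rho> = cmod z"
  have \<rho>: "0 \<le> \<rho>" "\<rho> < 1" using z unfolding \<rho>_def by auto
  have cb: "cball 0 \<rho> \<subseteq> ball (0::complex) 1" using \<rho> by auto
  obtain m where m: "m > 0" "\<And>w. w \<in> cball 0 \<rho> \<Longrightarrow> m \<le> \<nu> w"
    using nu_min[OF compact_cball cb] by blast
  have bound: "cmod (g z) \<le> (1 + 1 / m) * norm_nu \<nu> g" if g: "g \<in> Bnu \<nu>" for g
  proof -
    have N0: "norm_nu \<nu> g \<ge> 0" using norm_nu_nonneg[OF g] .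
    have "cmod (g z - g 0) \<le> norm_nu \<nu> g / m * cmod (z - 0)"
    proof (rule holo_diff_bound_gen[OF Bnu_D(1)[OF g] convex_cball cb])
      fix w assume w: "w \<in> cball (0::complex) \<rho>"
      then have wb: "w \<in> ball 0 1" using cb by auto
      show "cmod (deriv g w) \<le> norm_nu \<nu> g / m"
        using deriv_bound_nu[OF wb norm_nu_ge1[OF g wb] m(2)[OF w] m(1) N0] .
    qed (use \<rho> \<rho>_def in auto)
    also have "\<dots> \<le> norm_nu \<nu> g / m * 1" using z N0 m by (intro mult_left_mono) auto
    finally have "cmod (g z - g 0) \<le> norm_nu \<nu> g / m" by simp
    moreover have "cmod (g 0) \<le> norm_nu \<nu> g" using norm_nu_ge0[OF g] .
    ultimately show ?thesis using norm_triangle_ineq2[of "g z" "g 0"] by (simp add: field_simps)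
  qed
  have "OKfun (\<lambda>g. g z) (1 + 1 / m)"
    unfolding OKfun_def using m bound z by (auto simp: conv_def)
  moreover have "0 < 1 + 1 / m" using m(1) by (simp add: add_pos_pos)
  ultimately show ?thesis by blast
qed

lemma ok_deriv:
  assumes z: "z \<in> ball 0 1"
  shows "OKfun (\<lambda>g. deriv g z) (1 / \<nu> z)"
proof -
  have nz: "\<nu> z > 0" using nu_pos z by auto
  have "cmod (deriv g z) \<le> 1 / \<nu> z * norm_nu \<nu> g" if g: "g \<in> Bnu \<nu>" for g
    using norm_nu_ge1[OF g z] nz by (simp add: field_simps)
  moreover have "deriv (\<lambda>w. a * g w + b * h w) z = a * deriv g z + b * deriv h z"
    if "g \<in> Bnu \<nu>" "h \<in> Bnu \<nu>" for g h a b
    using deriv_lin[OF Bnu_D(1)[OF that(1)] Bnu_D(1)[OF that(2)] z] .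
  ultimately show ?thesis unfolding OKfun_def using nz z by (auto simp: conv_def)
qed

lemma ok_quot:
  assumes z: "z \<in> ball 0 1"
  obtains r K where "r > 0" "K > 0"
    "\<And>h. h \<noteq> 0 \<Longrightarrow> cmod h \<le> r \<Longrightarrow> z + h \<in> ball 0 1 \<and>
        OKfun (\<lambda>g. (g (z + h) - g z) / h - deriv g z) (K * cmod h)"
proof -
  obtain \<delta> where \<delta>: "\<delta> > 0" "cball z \<delta> \<subseteq> ball 0 1"
    using open_contains_cball z by (metis open_ball)
  define r where "r = \<delta> / 2"
  have r: "r > 0" "cball z (2 * r) \<subseteq> ball 0 1" using \<delta> unfolding r_def by auto
  have rball: "cball z r \<subseteq> ball 0 1"
  proof -
    have "cball z r \<subseteq> cball z (2 * r)" using r by (auto simp: subset_iff)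
    then show ?thesis using r(2) by blast
  qed
  obtain m where m: "m > 0" "\<And>w. w \<in> cball z (2 * r) \<Longrightarrow> m \<le> \<nu> w"
    using nu_min[OF compact_cball r(2)] by blast
  define K where "K = 1 / (m * r)"
  have K: "K > 0" unfolding K_def using m r by simp
  have bound: "cmod ((g (z + h) - g z) / h - deriv g z) \<le> K * cmod h * norm_nu \<nu> g"
    if g: "g \<in> Bnu \<nu>" and h: "h \<noteq> 0" "cmod h \<le> r" for g h
  proof -
    define N where "N = norm_nu \<nu> g"
    have N0: "N \<ge> 0" unfolding N_def using norm_nu_nonneg[OF g] .
    have hol: "g holomorphic_on ball 0 1" using Bnu_D(1)[OF g] .
    have hol': "deriv g holomorphic_on ball 0 1" using hol holomorphic_deriv open_ball by blast
    have d1: "cmod (deriv g w) \<le> N / m" if w: "w \<in> cball z (2 * r)" for w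
    proof -
      have wb: "w \<in> ball 0 1" using w r by auto
      show ?thesis unfolding N_def using deriv_bound_nu[OF wb norm_nu_ge1[OF g wb] m(2)[OF w] m(1)] N0 N_def by simp
    qed
    have d2: "cmod (deriv (deriv g) w) \<le> N / m / r" if w: "w \<in> cball z r" for w
    proof -
      have sub: "cball w r \<subseteq> cball z (2 * r)"
      proof
        fix x assume "x \<in> cball w r"
        then have "dist w x \<le> r" "dist z w \<le> r" using w by auto
        then have "dist z x \<le> 2 * r" using dist_triangle[of z x w] by simp
        then show "x \<in> cball z (2 * r)" by simp
      qed
      have sub': "cball w r \<subseteq> ball 0 1" using sub r by auto
      have "cmod ((deriv ^^ 1) (deriv g) w) \<le> fact 1 * (N / m) / r ^ 1"
      proof (rule Cauchy_inequality)
        show "deriv g holomorphic_on ball w r" using hol' sub' ball_subset_cball holomorphic_on_subset by blast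
        show "continuous_on (cball w r) (deriv g)" using hol' sub' holomorphic_on_imp_continuous_on continuous_on_subset by blast
        show "0 < r" using r by simp
        fix x assume "cmod (w - x) = r"
        then have "x \<in> cball w r" by (simp add: dist_norm)
        then show "cmod (deriv g x) \<le> N / m" using d1 sub by blast
      qed
      then show ?thesis by simp
    qed
    have d3: "cmod (deriv g \<zeta> - deriv g z) \<le> N / m / r * cmod (\<zeta> - z)" if \<zeta>: "\<zeta> \<in> cball z r" for \<zeta>
    proof (rule holo_diff_bound_gen[OF hol' convex_cball _ d2 \<zeta>])
      have "cball z r \<subseteq> cball z (2 * r)" using r by (auto simp: subset_iff)
      then show "cball z r \<subseteq> ball 0 1" using r(2) by blast
      show "z \<in> cball z r" using r by simp
    qed
    define u where "u \<zeta> = g \<zeta> - \<zeta> * deriv g z" for \<zeta>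
    have Sr: "cball z (cmod h) \<subseteq> cball z r" using h by auto
    have "cmod (u (z + h) - u z) \<le> (N / m / r * cmod h) * cmod ((z + h) - z)"
    proof (rule field_differentiable_bound[OF convex_cball])
      fix x assume x: "x \<in> cball z (cmod h)"
      then have xb: "x \<in> ball 0 1" using Sr rball by blast
      have "g field_differentiable at x" using hol xb holomorphic_on_imp_differentiable_at by auto
      then have "(g has_field_derivative deriv g x) (at x)" using DERIV_deriv_iff_field_differentiable by blast
      then have "(u has_field_derivative deriv g x - deriv g z) (at x)"
        unfolding u_def by (auto intro!: derivative_eq_intros)
      then show "(u has_field_derivative deriv g x - deriv g z) (at x within cball z (cmod h))"
        by (rule has_field_derivative_at_within)
      have "cmod (deriv g x - deriv g z) \<le> N / m / r * cmod (x - z)" using d3 x Sr by blast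
      also have "\<dots> \<le> N / m / r * cmod h" using x N0 m r by (intro mult_left_mono) (auto simp: dist_norm norm_minus_commute)
      finally show "cmod (deriv g x - deriv g z) \<le> N / m / r * cmod h" .
    qed (auto simp: dist_norm)
    then have Xb: "cmod (g (z + h) - g z - h * deriv g z) \<le> (N / m / r * cmod h) * cmod h"
      unfolding u_def by (simp add: algebra_simps)
    have hpos: "cmod h > 0" using h by simp
    have eq: "(g (z + h) - g z) / h - deriv g z = (g (z + h) - g z - h * deriv g z) / h"
      using h by (simp add: field_simps)
    have "cmod ((g (z + h) - g z) / h - deriv g z) = cmod (g (z + h) - g z - h * deriv g z) / cmod h"
      unfolding eq by (simp add: norm_divide)
    also have "\<dots> \<le> N / m / r * cmod h"
      by (subst pos_divide_le_eq[OF hpos]) (rule Xb)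
    also have "\<dots> = K * cmod h * norm_nu \<nu> g" unfolding K_def N_def by (simp add: field_simps)
    finally show ?thesis .
  qed
  have main: "z + h \<in> ball 0 1 \<and> OKfun (\<lambda>g. (g (z + h) - g z) / h - deriv g z) (K * cmod h)"
    if h: "h \<noteq> 0" "cmod h \<le> r" for h
  proof
    have zh: "z + h \<in> cball z (2 * r)" using h r by (simp add: dist_norm)
    then show zhb: "z + h \<in> ball 0 1" using r by auto
    show "OKfun (\<lambda>g. (g (z + h) - g z) / h - deriv g z) (K * cmod h)"
      unfolding OKfun_def
    proof (intro conjI ballI allI impI)
      show "0 \<le> K * cmod h" using K by simp
      fix g h' a b assume g: "g \<in> Bnu \<nu>" and h': "h' \<in> Bnu \<nu>"
      show "((a * g (z + h) + b * h' (z + h)) - (a * g z + b * h' z)) / h - deriv (\<lambda>w. a * g w + b * h' w) z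
          = a * ((g (z + h) - g z) / h - deriv g z) + b * ((h' (z + h) - h' z) / h - deriv h' z)"
        using deriv_lin[OF Bnu_D(1)[OF g] Bnu_D(1)[OF h'] z] h(1) by (simp add: field_simps)
    next
      fix g assume "g \<in> Bnu \<nu>"
      then show "cmod ((g (z + h) - g z) / h - deriv g z) \<le> K * cmod h * norm_nu \<nu> g"
        using bound h by blast
    next
      fix gs g assume "conv gs g"
      then show "(\<lambda>k. (gs k (z + h) - gs k z) / h - deriv (gs k) z) \<longlonglongrightarrow> (g (z + h) - g z) / h - deriv g z"
        unfolding conv_def using z zhb h(1) by (intro tendsto_intros) auto
    qed
  qed
  show ?thesis using that[OF r(1) K main] .
qed

end



context lcs begin

lemma derivE_unique:
  assumes "has_derivE sc p F d z" "has_derivE sc p F d' z"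
  shows "d = d'"
proof -
  have "d - d' = 0"
  proof (rule p_haus)
  fix i
  define q where "q h = sc (1 / h) (F (z + h) - F z)" for h
  have t1: "((\<lambda>h. p i (q h - d)) \<longlongrightarrow> 0) (at 0)" using assms(1) unfolding has_derivE_def q_def by blast
  have t2: "((\<lambda>h. p i (q h - d')) \<longlongrightarrow> 0) (at 0)" using assms(2) unfolding has_derivE_def q_def by blast
  have le: "p i (d' - d) \<le> p i (q h - d) + p i (q h - d')" for h
    using p_diff_le[of i "q h - d" "q h - d'"] by simp
  have "p i (d' - d) \<le> 0 + 0"
    by (rule tendsto_le[OF _ tendsto_add[OF t1 t2] tendsto_const]) (use le in auto)
  then have "p i (d' - d) = 0" using p_nonneg[of i "d' - d"] by simp
  then show "p i (d - d') = 0" using p_commute by simp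
  qed
  then show ?thesis by simp
qed

lemma derivE_eq: "has_derivE sc p F d z \<Longrightarrow> derivE sc p F z = d"
  unfolding derivE_def by (rule some_equality) (auto intro: derivE_unique)

lemma derivE_has: "\<exists>d. has_derivE sc p F d z \<Longrightarrow> has_derivE sc p F (derivE sc p F z) z"
  unfolding derivE_def by (rule someI_ex)

lemma dual_tendsto:
  assumes e: "e \<in> dual_lc sc p" and hd: "has_derivE sc p F d z"
  shows "((\<lambda>h. e (sc (1 / h) (F (z + h) - F z) - d)) \<longlongrightarrow> 0) (at 0)"
proof -
  obtain j K where K: "K \<ge> 0" "\<And>y. cmod (e y) \<le> K * p j y" by (rule dual_bound[OF e]) (rule that)
  have "((\<lambda>h. K * p j (sc (1 / h) (F (z + h) - F z) - d)) \<longlongrightarrow> K * 0) (at 0)"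
    using hd unfolding has_derivE_def by (intro tendsto_mult_left) blast
  then have t: "((\<lambda>h. K * p j (sc (1 / h) (F (z + h) - F z) - d)) \<longlongrightarrow> 0) (at 0)" by simp
  have ev: "\<forall>\<^sub>F h in at 0. cmod (e (sc (1 / h) (F (z + h) - F z) - d)) \<le> K * p j (sc (1 / h) (F (z + h) - F z) - d)"
    using K(2) by (intro always_eventually allI) 
  show ?thesis by (rule Lim_null_comparison[OF ev t])
qed

lemma dual_DERIV:
  assumes e: "e \<in> dual_lc sc p" and hd: "has_derivE sc p F d z"
  shows "((\<lambda>w. e (F w)) has_field_derivative e d) (at z)"
proof -
  have "((\<lambda>h. e (sc (1 / h) (F (z + h) - F z) - d) + e d) \<longlongrightarrow> 0 + e d) (at 0)"
    by (intro tendsto_add dual_tendsto[OF e hd] tendsto_const)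
  moreover have "e (sc (1 / h) (F (z + h) - F z) - d) + e d = (e (F (z + h)) - e (F z)) / h" for h
    using dual_diff[OF e] dual_sc[OF e] by (simp add: divide_inverse mult.commute)
  ultimately show ?thesis unfolding DERIV_def by simp
qed

end

context main begin

definition Fv where "Fv z = (SOME x. \<forall>e\<in>G. e x = ge e z)"
definition Dv where "Dv z = (SOME x. \<forall>e\<in>G. e x = deriv (ge e) z)"

lemma Fv: assumes z: "z \<in> ball 0 1" shows "\<forall>e\<in>G. e (Fv z) = ge e z"
proof -
  obtain A where A: "A > 0" "OKfun (\<lambda>g. g z) A" using ok_eval[OF z] by blast
  obtain x where "\<forall>e\<in>G. e x = ge e z" using rep[OF A(2) A(1)] by blast
  then show ?thesis unfolding Fv_def by (rule someI[where P="\<lambda>x. \<forall>e\<in>G. e x = ge e z"])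
qed

lemma Dv: assumes z: "z \<in> ball 0 1"
  shows "\<forall>e\<in>G. e (Dv z) = deriv (ge e) z" "\<forall>i. p i (Dv z) \<le> 4 * C * (1 / \<nu> z) * M i"
proof -
  have nz: "\<nu> z > 0" using nu_pos z by auto
  obtain x where x: "\<forall>e\<in>G. e x = deriv (ge e) z" "\<forall>i. p i x \<le> 4 * C * (1 / \<nu> z) * M i"
    using rep[OF ok_deriv[OF z]] nz by auto
  have "\<forall>e\<in>G. e (Dv z) = deriv (ge e) z"
    unfolding Dv_def by (rule someI[where P="\<lambda>x. \<forall>e\<in>G. e x = deriv (ge e) z"]) (rule x(1))
  then show "\<forall>e\<in>G. e (Dv z) = deriv (ge e) z" .
  then have "Dv z = x" using x(1) by (intro sep_eq) auto
  then show "\<forall>i. p i (Dv z) \<le> 4 * C * (1 / \<nu> z) * M i" using x(2) by simp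
qed

lemma hasD:
  assumes z: "z \<in> ball 0 1"
  shows "has_derivE sc p Fv (Dv z) z"
proof -
  obtain r K where rK: "r > 0" "K > 0"
    "\<And>h. h \<noteq> 0 \<Longrightarrow> cmod h \<le> r \<Longrightarrow> z + h \<in> ball 0 1 \<and>
        OKfun (\<lambda>g. (g (z + h) - g z) / h - deriv g z) (K * cmod h)"
    using ok_quot[OF z] by blast
  have bnd: "p i (sc (1 / h) (Fv (z + h) - Fv z) - Dv z) \<le> 4 * C * (K * cmod h) * M i"
    if h: "h \<noteq> 0" "cmod h \<le> r" for h i
  proof -
    have zh: "z + h \<in> ball 0 1" and ok: "OKfun (\<lambda>g. (g (z + h) - g z) / h - deriv g z) (K * cmod h)"
      using rK(3)[OF h] by auto
    have Apos: "K * cmod h > 0" using rK h by simp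
    obtain x where x: "\<forall>e\<in>G. e x = (ge e (z + h) - ge e z) / h - deriv (ge e) z"
        "\<forall>i. p i x \<le> 4 * C * (K * cmod h) * M i"
      using rep[OF ok Apos] by blast
    have "sc (1 / h) (Fv (z + h) - Fv z) - Dv z = x"
    proof (rule sep_eq)
      fix e assume e: "e \<in> G"
      have ed: "e \<in> dual_lc sc p" using e G_dual by auto
      show "e (sc (1 / h) (Fv (z + h) - Fv z) - Dv z) = e x"
        using x(1) e Fv[OF zh] Fv[OF z] Dv(1)[OF z] dual_diff[OF ed] dual_sc[OF ed]
        by (simp add: divide_inverse mult.commute)
    qed
    then show ?thesis using x(2) by simp
  qed
  show ?thesis unfolding has_derivE_def
  proof
    fix i
    show "((\<lambda>h. p i (sc (1 / h) (Fv (z + h) - Fv z) - Dv z)) \<longlongrightarrow> 0) (at 0)"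
    proof (rule tendsto_sandwich[of "\<lambda>_. 0" _ _ "\<lambda>h. 4 * C * (K * cmod h) * M i"])
      show "\<forall>\<^sub>F h in at 0. 0 \<le> p i (sc (1 / h) (Fv (z + h) - Fv z) - Dv z)" by (simp add: p_nonneg)
      show "\<forall>\<^sub>F h in at 0. p i (sc (1 / h) (Fv (z + h) - Fv z) - Dv z) \<le> 4 * C * (K * cmod h) * M i"
        unfolding eventually_at using rK(1) bnd by (intro exI[of _ r]) (auto simp: dist_norm)
      show "((\<lambda>_. 0::real) \<longlongrightarrow> 0) (at 0)" by simp
      have "((\<lambda>h::complex. 4 * C * (K * cmod h) * M i) \<longlongrightarrow> 4 * C * (K * cmod (0::complex)) * M i) (at 0)"
        by (intro tendsto_intros)
      then show "((\<lambda>h::complex. 4 * C * (K * cmod h) * M i) \<longlongrightarrow> 0) (at 0)" by simp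
    qed
  qed
qed

lemma final:
  "\<exists>F\<in>Bnu_E sc p \<nu>. F 0 = f0 \<and> (\<forall>z\<in>U. derivE sc p F z = f1 z) \<and>
     (\<forall>H\<in>Bnu_E sc p \<nu>. H 0 = f0 \<and> (\<forall>z\<in>U. derivE sc p H z = f1 z)
          \<longrightarrow> (\<forall>z\<in>ball 0 1. H z = F z))"
proof (intro bexI conjI ballI impI)
  have dE: "derivE sc p Fv z = Dv z" if "z \<in> ball 0 1" for z using derivE_eq[OF hasD[OF that]] .
  have bF: "p i (derivE sc p Fv z) * \<nu> z \<le> 4 * C * M i" if z: "z \<in> ball 0 1" for z i
  proof -
    have nz: "\<nu> z > 0" using nu_pos z by auto
    have "p i (derivE sc p Fv z) * \<nu> z \<le> 4 * C * (1 / \<nu> z) * M i * \<nu> z"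
      using Dv(2)[OF z] dE[OF z] nz by (intro mult_right_mono) auto
    then show ?thesis using nz by simp
  qed
  have "\<exists>d. has_derivE sc p Fv d w" if "w \<in> ball 0 1" for w using hasD[OF that] by blast
  moreover have "bdd_above ((\<lambda>z. p i (derivE sc p Fv z) * \<nu> z) ` ball 0 1)" for i
    using bF by (intro bdd_aboveI2) auto
  ultimately show FB: "Fv \<in> Bnu_E sc p \<nu>" unfolding Bnu_E_def by auto
  show "Fv 0 = f0"
    by (rule sep_eq) (use Fv[of 0] ge in auto)
  show "derivE sc p Fv z = f1 z" if z: "z \<in> U" for z
  proof -
    have zb: "z \<in> ball 0 1" using z U_sub by auto
    show ?thesis unfolding dE[OF zb] by (rule sep_eq) (use Dv(1)[OF zb] ge z in auto)
  qed
  fix H :: "complex \<Rightarrow> 'e" and z :: complex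
  assume H: "H \<in> Bnu_E sc p \<nu>" and Hc: "H 0 = f0 \<and> (\<forall>z\<in>U. derivE sc p H z = f1 z)"
    and z: "z \<in> ball 0 1"
  have Hd: "has_derivE sc p H (derivE sc p H w) w" if "w \<in> ball 0 1" for w
    using H that unfolding Bnu_E_def by (intro derivE_has) auto
  have Fd: "has_derivE sc p Fv (derivE sc p Fv w) w" if "w \<in> ball 0 1" for w
    using dE[OF that] hasD[OF that] by simp
  show "H z = Fv z"
  proof (rule sep_eq)
    fix e assume e: "e \<in> G"
    have ed: "e \<in> dual_lc sc p" using e G_dual by auto
    obtain K j where K: "K \<ge> 0" "\<And>y. cmod (e y) \<le> K * p j y" by (rule dual_bound[OF ed]) (rule that)
    define k where "k w = e (H w) - e (Fv w)" for w
    define k' where "k' w = e (derivE sc p H w) - e (derivE sc p Fv w)" for w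
    have kd: "(k has_field_derivative k' w) (at w)" if w: "w \<in> ball 0 1" for w
      unfolding k_def k'_def by (intro derivative_intros dual_DERIV[OF ed] Hd Fd w)
    have kdv: "deriv k w = k' w" if "w \<in> ball 0 1" for w using kd[OF that] DERIV_imp_deriv by blast
    have khol: "k holomorphic_on ball 0 1"
      using kd holomorphic_on_open open_ball by blast
    obtain BH where BH: "\<forall>w\<in>ball 0 1. p j (derivE sc p H w) * \<nu> w \<le> BH"
    proof -
      have "\<exists>M. \<forall>x\<in>ball 0 1. p j (derivE sc p H x) * \<nu> x \<le> M"
        using H unfolding Bnu_E_def bdd_above_def by auto
      then show ?thesis using that by blast
    qed
    have kb: "cmod (deriv k w) * \<nu> w \<le> K * (BH + 4 * C * M j)" if w: "w \<in> ball 0 1" for w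
    proof -
      have nn: "\<nu> w \<ge> 0" using nu_nonneg[OF w] .
      have "cmod (deriv k w) * \<nu> w \<le> (cmod (e (derivE sc p H w)) + cmod (e (derivE sc p Fv w))) * \<nu> w"
        unfolding kdv[OF w] k'_def using nn by (intro mult_right_mono norm_triangle_ineq4) 
      also have "\<dots> \<le> (K * p j (derivE sc p H w) + K * p j (derivE sc p Fv w)) * \<nu> w"
        using nn K by (intro mult_right_mono add_mono) auto
      also have "\<dots> = K * (p j (derivE sc p H w) * \<nu> w + p j (derivE sc p Fv w) * \<nu> w)"
        by (simp add: algebra_simps)
      also have "\<dots> \<le> K * (BH + 4 * C * M j)"
        using K(1) BH bF[OF w] w by (intro mult_left_mono add_mono) auto
      finally show ?thesis .
    qed
    have kB: "k \<in> Bnu \<nu>" unfolding Bnu_def using khol kb by (auto intro!: bdd_aboveI2)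
    have k0: "k 0 = 0" unfolding k_def using Hc Fv[of 0] ge[OF e] e by auto
    have kU: "deriv k w = 0" if w: "w \<in> U" for w
    proof -
      have wb: "w \<in> ball 0 1" using w U_sub by auto
      have "derivE sc p Fv w = f1 w" using dE[OF wb] sep_eq[of "Dv w" "f1 w"] Dv(1)[OF wb] ge w by auto
      then show ?thesis unfolding kdv[OF wb] k'_def using Hc w by simp
    qed
    have "sup0 (\<lambda>z. cmod (deriv k z) * \<nu> z) U \<le> 0" by (rule sup0_least) (use kU in auto)
    moreover have "sup0 (\<lambda>z. cmod (deriv k z) * \<nu> z) U \<ge> 0"
      unfolding sup0_def by (rule cSup_upper) (auto intro: bdd_aboveI2[of _ _ 0] simp: kU)
    ultimately have s0: "sup0 (\<lambda>z. cmod (deriv k z) * \<nu> z) U = 0" by simp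
    have "norm_nu \<nu> k \<le> C * max (cmod (k 0)) (sup0 (\<lambda>z. cmod (deriv k z) * \<nu> z) U)"
      using samp kB by blast
    then have "norm_nu \<nu> k \<le> 0" unfolding s0 k0 by simp
    then have kd0: "deriv k w = 0" if w: "w \<in> ball 0 1" for w
    proof -
      have "cmod (deriv k w) * \<nu> w \<le> 0" using norm_nu_ge1[OF kB w] \<open>norm_nu \<nu> k \<le> 0\<close> by simp
      moreover have "\<nu> w > 0" using nu_pos w by blast
      ultimately show ?thesis by (simp add: mult_le_0_iff)
    qed
    have "\<exists>c. \<forall>x\<in>ball 0 1. k x = c"
    proof (rule has_field_derivative_zero_constant[OF convex_ball])
      fix x assume x: "x \<in> ball (0::complex) 1"
      show "(k has_field_derivative 0) (at x within ball 0 1)"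
        using kd[OF x] kdv[OF x] kd0[OF x] by (simp add: has_field_derivative_at_within)
    qed
    then obtain c where "\<forall>x\<in>ball 0 1. k x = c" by blast
    then have "k z = k 0" using z by simp
    then show "e (H z) = e (Fv z)" using k0 unfolding k_def by simp
  qed
qed

end

theorem mainTheorem8:
  fixes sc :: "complex \<Rightarrow> 'e::ab_group_add \<Rightarrow> 'e"
    and p :: "'i \<Rightarrow> 'e \<Rightarrow> real"
    and G :: "('e \<Rightarrow> complex) set"
    and \<nu> :: "complex \<Rightarrow> real"
    and Ustar :: "complex set"
    and f0 :: 'e
    and f1 :: "complex \<Rightarrow> 'e"
  assumes E: "lcHs sc p"
    and loc_compl: "locally_complete sc p"
    and G_dual: "G \<subseteq> dual_lc sc p"
    and G_subspace: "(\<lambda>_. 0) \<in> G" "\<forall>e\<in>G. \<forall>e'\<in>G. (\<lambda>x. e x + e' x) \<in> G"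
                    "\<forall>e\<in>G. \<forall>a::complex. (\<lambda>x. a * e x) \<in> G"
    and G_sep: "\<forall>x. (\<forall>e\<in>G. e x = 0) \<longrightarrow> x = 0"
    and nu_cont: "continuous_on (ball 0 1) \<nu>"
    and nu_pos: "\<forall>z\<in>ball 0 1. \<nu> z > 0"
    and U_sub: "Ustar \<subseteq> ball 0 1"
    and sampling: "\<exists>C>0. \<forall>g\<in>Bnu \<nu>.
        norm_nu \<nu> g \<le> C * max (cmod (g 0)) (sup0 (\<lambda>z. cmod (deriv g z) * \<nu> z) Ustar)"
    and f_bdd: "\<forall>i. bdd_above ((\<lambda>z. p i (f1 z) * \<nu> z) ` Ustar)"
    and f_weak: "\<forall>e\<in>G. \<exists>g\<in>Bnu \<nu>. g 0 = e f0 \<and> (\<forall>z\<in>Ustar. deriv g z = e (f1 z))"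
  shows "\<exists>F\<in>Bnu_E sc p \<nu>. F 0 = f0 \<and> (\<forall>z\<in>Ustar. derivE sc p F z = f1 z) \<and>
           (\<forall>H\<in>Bnu_E sc p \<nu>. H 0 = f0 \<and> (\<forall>z\<in>Ustar. derivE sc p H z = f1 z)
                \<longrightarrow> (\<forall>z\<in>ball 0 1. H z = F z))"
  proof -
  obtain C where C: "C > 0" "\<forall>g\<in>Bnu \<nu>. norm_nu \<nu> g \<le> C * max (cmod (g 0)) (sup0 (\<lambda>z. cmod (deriv g z) * \<nu> z) Ustar)"
    using sampling by blast
  interpret main sc p \<nu> Ustar C G f0 f1
  proof (unfold_locales)
  qed (use E loc_compl G_dual G_sep nu_cont nu_pos U_sub C f_bdd f_weak in auto)
  show ?thesis by (rule final)
qed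

end
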